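(* Let $k\ge 1$ and let $(X_1,Y_1)$ and $(X_2,Y_2)$ be pairs of CW complexes, where each $X_i$ is $k$-Dehn and each $Y_i\subseteq X_i$ is a $k$-Dehn subcomplex. Suppose $(X_1,Y_1)$ and $(X_2,Y_2)$ are quasi-isometric as pairs. Then $\mathrm{VolD}^k_{(X_1,Y_1)}\asymp \mathrm{VolD}^k_{(X_2,Y_2)}$.
   Context: For functions $f,g:\mathbb N\to\mathbb N$ write $f\preceq g$ if there is $C>0$ with $f(x)\le C\,g(Cx+C)+Cx+C$ for all $x$, and $f\asymp g$ if $f\preceq g$ and $g\preceq f$. In a CW complex a cellular $k$-chain is a finite sum $u=\sum \alpha_i\sigma_i$ with $\alpha_i\in\mathbb Z$ and $\sigma_i$ distinct $k$-cells; its volume is $V^k(u)=\sum|\alpha_i|$. For a subcomplex $Z$ and a $(k-1)$-cycle $z$ in $Z$ that bounds in $Z$, the filling volume is $FV^k_Z(z)=\min\{V^k(u): u \text{ a } k\text{-chain in } Z,\ \partial u=z\}$. A CW complex $X$ is $k$-Dehn if it is $k$-connected, its filling-volume (higher Dehn) functions of all orders $\le k$ are finite-valued, and there is a uniform bound $r$ on the number of boundary faces of any $m$-cell for $m\le k+1$. For a subcomplex $Y\subseteq X$ (both $k$-Dehn), the $k$-volume distortion function is $\mathrm{VolD}^k_{(X,Y)}(n)=\max\{FV^k_Y(z): z \text{ a } (k-1)\text{-cycle in } Y,\ FV^k_X(z)\le n\}$. Complexes carry the path metric in which every edge has length $1$. A $(K,C)$-quasi-isometric embedding $f:X\to X'$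 satisfies $\frac1K d(x,y)-C\le d(f(x),f(y))\le Kd(x,y)+C$; it is a quasi-isometry if moreover every point of $X'$ is within $C$ of $f(X)$. Pairs $(X_1,Y_1)$, $(X_2,Y_2)$ with $Y_i\subseteq X_i$ are quasi-isometric as pairs if there is a quasi-isometry $f:X_1\to X_2$ with $f(Y_1)\subseteq Y_2$ and $f|_{Y_1}:Y_1\to Y_2$ a quasi-isometry. *)

theory Defs
  imports Main "HOL-Library.Extended_Nat"
begin

text \<open>A CW complex is recorded by its set of cells, their dimensions, the cellular
incidence numbers (cinc X s t = coefficient of the cell t in the cellular boundary of s),
the endpoints of every 1-cell, and for every 2-cell an attaching map given as a closed
edge loop (a list of oriented 1-cells; True = traversed from first to second endpoint).\<close>

record 'c cellcx =
  cells :: "'c set"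
  cdim  :: "'c \<Rightarrow> nat"
  cinc  :: "'c \<Rightarrow> 'c \<Rightarrow> int"
  cends :: "'c \<Rightarrow> 'c \<times> 'c"
  catt  :: "'c \<Rightarrow> ('c \<times> bool) list"

definition verts :: "'c cellcx \<Rightarrow> 'c set" where
  "verts X = {v \<in> cells X. cdim X v = 0}"

definition esrc :: "'c cellcx \<Rightarrow> 'c \<times> bool \<Rightarrow> 'c" where
  "esrc X eb = (if snd eb then fst (cends X (fst eb)) else snd (cends X (fst eb)))"

definition etgt :: "'c cellcx \<Rightarrow> 'c \<times> bool \<Rightarrow> 'c" where
  "etgt X eb = (if snd eb then snd (cends X (fst eb)) else fst (cends X (fst eb)))"

fun epath :: "'c cellcx \<Rightarrow> 'c \<Rightarrow> ('c \<times> bool) list \<Rightarrow> 'c \<Rightarrow> bool" where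
  "epath X v [] w = (v = w \<and> v \<in> verts X)"
| "epath X v (eb # p) w =
     (fst eb \<in> cells X \<and> cdim X (fst eb) = 1 \<and> esrc X eb = v \<and> v \<in> verts X
      \<and> epath X (etgt X eb) p w)"

definition rev_path :: "('c \<times> bool) list \<Rightarrow> ('c \<times> bool) list" where
  "rev_path p = rev (map (\<lambda>(e, b). (e, \<not> b)) p)"

definition traversals :: "('c \<times> bool) list \<Rightarrow> 'c \<Rightarrow> int" where
  "traversals p e = int (length (filter (\<lambda>x. x = (e, True)) p))
                    - int (length (filter (\<lambda>x. x = (e, False)) p))"

definition supp :: "('c \<Rightarrow> int) \<Rightarrow> 'c set" where
  "supp u = {s. u s \<noteq> 0}"

definition is_chain :: "'c cellcx \<Rightarrow> nat \<Rightarrow> ('c \<Rightarrow> int) \<Rightarrow> bool" where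
  "is_chain X m u \<longleftrightarrow> finite (supp u) \<and> (\<forall>s \<in> supp u. s \<in> cells X \<and> cdim X s = m)"

definition vol :: "('c \<Rightarrow> int) \<Rightarrow> nat" where
  "vol u = (\<Sum>s \<in> supp u. nat \<bar>u s\<bar>)"

definition bnd :: "'c cellcx \<Rightarrow> ('c \<Rightarrow> int) \<Rightarrow> ('c \<Rightarrow> int)" where
  "bnd X u = (\<lambda>t. \<Sum>s \<in> supp u. u s * cinc X s t)"

definition is_cycle :: "'c cellcx \<Rightarrow> nat \<Rightarrow> ('c \<Rightarrow> int) \<Rightarrow> bool" where
  "is_cycle X m z \<longleftrightarrow> is_chain X m z \<and> bnd X z = (\<lambda>_. 0)"

text \<open>Filling volume FV^m_X(z); it is infinite if z does not bound an m-chain in X.\<close>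
definition FV :: "'c cellcx \<Rightarrow> nat \<Rightarrow> ('c \<Rightarrow> int) \<Rightarrow> enat" where
  "FV X m z = (INF u \<in> {u. is_chain X m u \<and> bnd X u = z}. enat (vol u))"

definition cw :: "'c cellcx \<Rightarrow> bool" where
  "cw X \<longleftrightarrow>
     (\<forall>s \<in> cells X. finite (supp (cinc X s))
        \<and> (\<forall>t \<in> supp (cinc X s). t \<in> cells X \<and> cdim X t + 1 = cdim X s)
        \<and> bnd X (cinc X s) = (\<lambda>_. 0))
   \<and> (\<forall>e \<in> cells X. cdim X e = 1 \<longrightarrow>
        fst (cends X e) \<in> verts X \<and> snd (cends X e) \<in> verts X
        \<and> cinc X e = (\<lambda>t. (if t = snd (cends X e) then 1 else 0)
                         - (if t = fst (cends X e) then 1 else 0)))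
   \<and> (\<forall>s \<in> cells X. cdim X s = 2 \<longrightarrow>
        (catt X s = [] \<or> (\<exists>v. epath X v (catt X s) v))
        \<and> cinc X s = traversals (catt X s))"

definition subcomplex :: "'c cellcx \<Rightarrow> 'c set \<Rightarrow> bool" where
  "subcomplex X D \<longleftrightarrow> D \<subseteq> cells X
     \<and> (\<forall>s \<in> D. \<forall>t \<in> supp (cinc X s). t \<in> D)
     \<and> (\<forall>e \<in> D. cdim X e = 1 \<longrightarrow> fst (cends X e) \<in> D \<and> snd (cends X e) \<in> D)
     \<and> (\<forall>s \<in> D. cdim X s = 2 \<longrightarrow> (\<forall>eb \<in> set (catt X s). fst eb \<in> D))"

definition sub :: "'c cellcx \<Rightarrow> 'c set \<Rightarrow> 'c cellcx" where
  "sub X D = X\<lparr>cells := D\<rparr>"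

inductive hmove :: "'c cellcx \<Rightarrow> ('c \<times> bool) list \<Rightarrow> ('c \<times> bool) list \<Rightarrow> bool" for X where
  backtrack: "\<lbrakk> epath X v (p @ [(e, b), (e, \<not> b)] @ q) w; epath X v (p @ q) w \<rbrakk>
      \<Longrightarrow> hmove X (p @ [(e, b), (e, \<not> b)] @ q) (p @ q)"
| relator: "\<lbrakk> s \<in> cells X; cdim X s = 2;
             r \<in> {rotate i (catt X s) | i. True} \<union> {rotate i (rev_path (catt X s)) | i. True};
             epath X v (p @ r @ q) w; epath X v (p @ q) w \<rbrakk>
      \<Longrightarrow> hmove X (p @ r @ q) (p @ q)"

definition path_connected :: "'c cellcx \<Rightarrow> bool" where
  "path_connected X \<longleftrightarrow> verts X \<noteq> {} \<and> (\<forall>v \<in> verts X. \<forall>w \<in> verts X. \<exists>p. epath X v p w)"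

definition simply_connected :: "'c cellcx \<Rightarrow> bool" where
  "simply_connected X \<longleftrightarrow> path_connected X
     \<and> (\<forall>v p. epath X v p v \<longrightarrow> (symclp (hmove X))\<^sup>*\<^sup>* p [])"

text \<open>k-connected (via Hurewicz: connected, simply connected if k \<ge> 1, and vanishing
cellular homology in degrees 2..k).\<close>
definition k_connected :: "'c cellcx \<Rightarrow> nat \<Rightarrow> bool" where
  "k_connected X k \<longleftrightarrow> path_connected X
     \<and> (1 \<le> k \<longrightarrow> simply_connected X)
     \<and> (\<forall>m. 2 \<le> m \<and> m \<le> k \<longrightarrow>
          (\<forall>z. is_cycle X m z \<longrightarrow> (\<exists>u. is_chain X (Suc m) u \<and> bnd X u = z)))"

definition k_dehn :: "'c cellcx \<Rightarrow> nat \<Rightarrow> bool" where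
  "k_dehn X k \<longleftrightarrow> cw X \<and> k_connected X k
     \<and> (\<forall>j. 1 \<le> j \<and> j \<le> k \<longrightarrow>
          (\<forall>n. \<exists>B. \<forall>z. is_cycle X j z \<and> vol z \<le> n \<longrightarrow> FV X (Suc j) z \<le> enat B))
     \<and> (\<exists>r. \<forall>s \<in> cells X. cdim X s \<le> k + 1 \<longrightarrow>
          vol (cinc X s) \<le> r \<and> (cdim X s = 2 \<longrightarrow> length (catt X s) \<le> r))"

definition VolD :: "'c cellcx \<Rightarrow> 'c set \<Rightarrow> nat \<Rightarrow> nat \<Rightarrow> enat" where
  "VolD X D k n = (SUP z \<in> {z. is_cycle (sub X D) (k - 1) z \<and> FV X k z \<le> enat n}.
                     FV (sub X D) k z)"

definition fpreceq :: "(nat \<Rightarrow> enat) \<Rightarrow> (nat \<Rightarrow> enat) \<Rightarrow> bool" (infix "\<preceq>\<^sub>f" 50) where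
  "f \<preceq>\<^sub>f g \<longleftrightarrow> (\<exists>C::nat. C > 0 \<and>
      (\<forall>x. f x \<le> enat C * g (C * x + C) + enat (C * x + C)))"

definition fasymp :: "(nat \<Rightarrow> enat) \<Rightarrow> (nat \<Rightarrow> enat) \<Rightarrow> bool" (infix "\<asymp>\<^sub>f" 50) where
  "f \<asymp>\<^sub>f g \<longleftrightarrow> f \<preceq>\<^sub>f g \<and> g \<preceq>\<^sub>f f"

definition gdist :: "'c cellcx \<Rightarrow> 'c \<Rightarrow> 'c \<Rightarrow> nat" where
  "gdist X v w = (LEAST n. \<exists>p. epath X v p w \<and> length p = n)"

definition qi_embedding :: "'a cellcx \<Rightarrow> 'b cellcx \<Rightarrow> ('a \<Rightarrow> 'b) \<Rightarrow> real \<Rightarrow> real \<Rightarrow> bool" where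
  "qi_embedding X X' f K C \<longleftrightarrow> K > 0 \<and> C \<ge> 0
     \<and> (\<forall>x \<in> verts X. f x \<in> verts X')
     \<and> (\<forall>x \<in> verts X. \<forall>y \<in> verts X.
          real (gdist X x y) / K - C \<le> real (gdist X' (f x) (f y))
          \<and> real (gdist X' (f x) (f y)) \<le> K * real (gdist X x y) + C)"

definition quasi_isometry :: "'a cellcx \<Rightarrow> 'b cellcx \<Rightarrow> ('a \<Rightarrow> 'b) \<Rightarrow> real \<Rightarrow> real \<Rightarrow> bool" where
  "quasi_isometry X X' f K C \<longleftrightarrow> qi_embedding X X' f K C
     \<and> (\<forall>y \<in> verts X'. \<exists>x \<in> verts X. real (gdist X' y (f x)) \<le> C)"

definition qi_pairs :: "'a cellcx \<Rightarrow> 'a set \<Rightarrow> 'b cellcx \<Rightarrow> 'b set \<Rightarrow> bool" where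
  "qi_pairs X1 D1 X2 D2 \<longleftrightarrow> (\<exists>f K C K' C'.
      quasi_isometry X1 X2 f K C
      \<and> (\<forall>x \<in> verts (sub X1 D1). f x \<in> verts (sub X2 D2))
      \<and> quasi_isometry (sub X1 D1) (sub X2 D2) f K' C')"

end

theory Submission
  imports Defs "HOL-Library.Function_Algebras"
begin


definition dl :: "'c \<Rightarrow> 'c \<Rightarrow> int" where
  "dl v = (\<lambda>t. if t = v then 1 else 0)"

definition lift :: "('a \<Rightarrow> 'b \<Rightarrow> int) \<Rightarrow> ('a \<Rightarrow> int) \<Rightarrow> 'b \<Rightarrow> int" where
  "lift F u = (\<lambda>t. \<Sum>s\<in>supp u. u s * F s t)"

lemma bnd_lift: "bnd X u = lift (cinc X) u"
  by (simp add: bnd_def lift_def)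

lemma lift_superset:
  assumes "finite A" "supp u \<subseteq> A"
  shows "lift F u t = (\<Sum>s\<in>A. u s * F s t)"
  unfolding lift_def using assms
  by (intro sum.mono_neutral_left) (auto simp: supp_def)

lemma supp_add: "supp (u + v) \<subseteq> supp u \<union> supp v"
  by (auto simp: supp_def)

lemma supp_diff: "supp (u - v) \<subseteq> supp u \<union> supp v"
  by (auto simp: supp_def)

lemma supp_zero[simp]: "supp (0::'a\<Rightarrow>int) = {}"
  by (simp add: supp_def)

lemma supp_dl[simp]: "supp (dl v) = {v}"
  by (auto simp: supp_def dl_def)

lemma lift_add:
  assumes "finite (supp u)" "finite (supp v)"
  shows "lift F (u + v) = lift F u + lift F v"
proof
  fix t
  let ?A = "supp u \<union> supp v"
  have "lift F (u + v) t = (\<Sum>s\<in>?A. (u+v) s * F s t)"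
    using assms supp_add[of u v] by (intro lift_superset) auto
  also have "\<dots> = (\<Sum>s\<in>?A. u s * F s t) + (\<Sum>s\<in>?A. v s * F s t)"
    by (simp add: distrib_right sum.distrib)
  also have "\<dots> = lift F u t + lift F v t"
    using lift_superset[of ?A u F t] lift_superset[of ?A v F t] assms by simp
  finally show "lift F (u + v) t = (lift F u + lift F v) t" by simp
qed

lemma lift_diff:
  assumes "finite (supp u)" "finite (supp v)"
  shows "lift F (u - v) = lift F u - lift F v"
proof
  fix t
  let ?A = "supp u \<union> supp v"
  have "lift F (u - v) t = (\<Sum>s\<in>?A. (u-v) s * F s t)"
    using assms supp_diff[of u v] by (intro lift_superset) auto
  also have "\<dots> = (\<Sum>s\<in>?A. u s * F s t) - (\<Sum>s\<in>?A. v s * F s t)"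
    by (simp add: left_diff_distrib sum_subtractf)
  also have "\<dots> = lift F u t - lift F v t"
    using lift_superset[of ?A u F t] lift_superset[of ?A v F t] assms by simp
  finally show "lift F (u - v) t = (lift F u - lift F v) t" by simp
qed

lemma lift_zero[simp]: "lift F 0 = 0"
  by (simp add: lift_def fun_eq_iff)

lemma lift_dl[simp]: "lift F (dl s) = F s"
  by (simp add: lift_def fun_eq_iff) (simp add: dl_def)

lemma lift_fam_diff: "lift (\<lambda>s. F s - G s) u = lift F u - lift G u"
  by (simp add: lift_def fun_eq_iff right_diff_distrib sum_subtractf)

lemma lift_fam_zero[simp]: "lift (\<lambda>s. 0) u = 0"
  by (simp add: lift_def fun_eq_iff)

lemma lift_cong: "(\<And>s. s \<in> supp u \<Longrightarrow> F s = G s) \<Longrightarrow> lift F u = lift G u"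
  by (simp add: lift_def)

lemma lift_dl_id:
  assumes "finite (supp u)" shows "lift dl u = u"
proof
  fix t
  have "lift dl u t = (\<Sum>s\<in>supp u. if s = t then u s else 0)"
    unfolding lift_def by (intro sum.cong) (auto simp: dl_def)
  also have "\<dots> = (if t \<in> supp u then u t else 0)"
    using assms by (simp add: sum.delta')
  also have "\<dots> = u t" by (auto simp: supp_def)
  finally show "lift dl u t = u t" .
qed

lemma supp_lift: "supp (lift F u) \<subseteq> (\<Union>s\<in>supp u. supp (F s))"
proof
  fix t assume "t \<in> supp (lift F u)"
  then have "(\<Sum>s\<in>supp u. u s * F s t) \<noteq> 0" by (simp add: supp_def lift_def)
  then obtain s where "s \<in> supp u" "u s * F s t \<noteq> 0" by (rule sum.not_neutral_contains_not_neutral)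
  then show "t \<in> (\<Union>s\<in>supp u. supp (F s))" by (auto simp: supp_def)
qed

lemma finite_supp_lift:
  assumes "finite (supp u)" "\<And>s. s \<in> supp u \<Longrightarrow> finite (supp (F s))"
  shows "finite (supp (lift F u))"
  using supp_lift[of F u] assms by (meson finite_UN_I finite_subset)

lemma lift_assoc:
  assumes fu: "finite (supp u)" and fF: "\<And>s. s \<in> supp u \<Longrightarrow> finite (supp (F s))"
  shows "lift G (lift F u) = lift (\<lambda>s. lift G (F s)) u"
proof
  fix t
  define A where "A = (\<Union>s\<in>supp u. supp (F s))"
  have fA: "finite A" using fu fF by (auto simp: A_def)
  have "lift G (lift F u) t = (\<Sum>x\<in>A. lift F u x * G x t)"
    using fA supp_lift[of F u] by (intro lift_superset) (auto simp: A_def)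
  also have "\<dots> = (\<Sum>x\<in>A. \<Sum>s\<in>supp u. u s * F s x * G x t)"
    by (simp add: lift_def sum_distrib_right)
  also have "\<dots> = (\<Sum>s\<in>supp u. u s * (\<Sum>x\<in>A. F s x * G x t))"
    by (subst sum.swap) (simp add: sum_distrib_left mult.assoc)
  also have "\<dots> = (\<Sum>s\<in>supp u. u s * lift G (F s) t)"
  proof (rule sum.cong[OF refl])
    fix s assume "s \<in> supp u"
    then have "lift G (F s) t = (\<Sum>x\<in>A. F s x * G x t)"
      using fA by (intro lift_superset) (auto simp: A_def)
    then show "u s * (\<Sum>x\<in>A. F s x * G x t) = u s * lift G (F s) t" by simp
  qed
  also have "\<dots> = lift (\<lambda>s. lift G (F s)) u t" by (simp add: lift_def)
  finally show "lift G (lift F u) t = lift (\<lambda>s. lift G (F s)) u t" .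
qed

text \<open>Volume\<close>

lemma vol_int: "int (vol u) = (\<Sum>s\<in>supp u. \<bar>u s\<bar>)"
  by (simp add: vol_def)

lemma vol_superset:
  assumes "finite A" "supp u \<subseteq> A"
  shows "int (vol u) = (\<Sum>s\<in>A. \<bar>u s\<bar>)"
  unfolding vol_int using assms
  by (intro sum.mono_neutral_left) (auto simp: supp_def)

lemma vol_zero[simp]: "vol 0 = 0"
  by (simp add: vol_def)

lemma vol_dl[simp]: "vol (dl v) = 1"
  by (simp add: vol_def) (simp add: dl_def)

lemma vol_add:
  assumes "finite (supp u)" "finite (supp v)"
  shows "vol (u + v) \<le> vol u + vol v"
proof -
  let ?A = "supp u \<union> supp v"
  have "int (vol (u + v)) = (\<Sum>s\<in>?A. \<bar>(u+v) s\<bar>)"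
    using assms supp_add[of u v] by (intro vol_superset) auto
  also have "\<dots> \<le> (\<Sum>s\<in>?A. \<bar>u s\<bar> + \<bar>v s\<bar>)"
    by (intro sum_mono) (simp add: abs_triangle_ineq)
  also have "\<dots> = int (vol u) + int (vol v)"
    using vol_superset[of ?A u] vol_superset[of ?A v] assms by (simp add: sum.distrib)
  finally show ?thesis by linarith
qed

lemma vol_diff:
  assumes "finite (supp u)" "finite (supp v)"
  shows "vol (u - v) \<le> vol u + vol v"
proof -
  let ?A = "supp u \<union> supp v"
  have "int (vol (u - v)) = (\<Sum>s\<in>?A. \<bar>(u-v) s\<bar>)"
    using assms supp_diff[of u v] by (intro vol_superset) auto
  also have "\<dots> \<le> (\<Sum>s\<in>?A. \<bar>u s\<bar> + \<bar>v s\<bar>)"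
    by (intro sum_mono) (simp add: abs_triangle_ineq4)
  also have "\<dots> = int (vol u) + int (vol v)"
    using vol_superset[of ?A u] vol_superset[of ?A v] assms by (simp add: sum.distrib)
  finally show ?thesis by linarith
qed

lemma vol_lift:
  assumes fu: "finite (supp u)" and fF: "\<And>s. s \<in> supp u \<Longrightarrow> finite (supp (F s))"
    and M: "\<And>s. s \<in> supp u \<Longrightarrow> vol (F s) \<le> M"
  shows "vol (lift F u) \<le> M * vol u"
proof -
  define A where "A = (\<Union>s\<in>supp u. supp (F s))"
  have fA: "finite A" using fu fF by (auto simp: A_def)
  have "int (vol (lift F u)) = (\<Sum>x\<in>A. \<bar>lift F u x\<bar>)"
    using fA supp_lift[of F u] by (intro vol_superset) (auto simp: A_def)
  also have "\<dots> \<le> (\<Sum>x\<in>A. \<Sum>s\<in>supp u. \<bar>u s\<bar> * \<bar>F s x\<bar>)"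
    by (intro sum_mono) (auto simp: lift_def abs_mult intro: order.trans[OF sum_abs])
  also have "\<dots> = (\<Sum>s\<in>supp u. \<bar>u s\<bar> * (\<Sum>x\<in>A. \<bar>F s x\<bar>))"
    by (subst sum.swap) (simp add: sum_distrib_left)
  also have "\<dots> = (\<Sum>s\<in>supp u. \<bar>u s\<bar> * int (vol (F s)))"
  proof (rule sum.cong[OF refl])
    fix s assume "s \<in> supp u"
    then have "int (vol (F s)) = (\<Sum>x\<in>A. \<bar>F s x\<bar>)"
      using fA by (intro vol_superset) (auto simp: A_def)
    then show "\<bar>u s\<bar> * (\<Sum>x\<in>A. \<bar>F s x\<bar>) = \<bar>u s\<bar> * int (vol (F s))" by simp
  qed
  also have "\<dots> \<le> (\<Sum>s\<in>supp u. \<bar>u s\<bar> * int M)"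
    using M by (intro sum_mono mult_left_mono) auto
  also have "\<dots> = int M * int (vol u)"
    by (simp add: vol_int sum_distrib_left mult.commute)
  finally show ?thesis by (metis of_nat_le_iff of_nat_mult)
qed



lemma sub_simps[simp]: "cells (sub X D) = D" "cdim (sub X D) = cdim X" "cinc (sub X D) = cinc X"
  "cends (sub X D) = cends X" "catt (sub X D) = catt X"
  by (simp_all add: sub_def)

lemma sub_sub[simp]: "sub (sub X D) D = sub X D"
  by (simp add: sub_def)

lemma bnd_sub[simp]: "bnd (sub X D) = bnd X"
  by (simp add: bnd_def fun_eq_iff)

lemma verts_sub: "verts (sub X D) = {v \<in> D. cdim X v = 0}"
  by (simp add: verts_def)

lemma is_chain_sub_supp: "is_chain (sub X D) m u \<Longrightarrow> supp u \<subseteq> D"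
  by (auto simp: is_chain_def)

lemma is_chain_sub_X: "is_chain (sub X D) m u \<Longrightarrow> D \<subseteq> cells X \<Longrightarrow> is_chain X m u"
  by (auto simp: is_chain_def)

lemma is_chain_subI: "is_chain X m u \<Longrightarrow> supp u \<subseteq> D \<Longrightarrow> is_chain (sub X D) m u"
  by (auto simp: is_chain_def)

lemma is_chain_fin: "is_chain X m u \<Longrightarrow> finite (supp u)"
  by (simp add: is_chain_def)

lemma is_chain_add: "is_chain X m u \<Longrightarrow> is_chain X m v \<Longrightarrow> is_chain X m (u + v)"
  using supp_add[of u v] unfolding is_chain_def by (meson Un_iff finite_Un finite_subset subsetD)

lemma is_chain_diff: "is_chain X m u \<Longrightarrow> is_chain X m v \<Longrightarrow> is_chain X m (u - v)"
  using supp_diff[of u v] unfolding is_chain_def by (meson Un_iff finite_Un finite_subset subsetD)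

lemma supp_uminus[simp]: "supp (- u) = supp u"
  by (simp add: supp_def)

lemma vol_uminus[simp]: "vol (- u) = vol u"
  by (simp add: vol_def)

lemma is_chain_uminus[simp]: "is_chain X m (- u) = is_chain X m u"
  by (simp add: is_chain_def)

lemma bnd_uminus[simp]: "bnd X (- u) = - bnd X u"
  by (simp add: bnd_def fun_eq_iff sum_negf)

lemma is_chain_zero[simp]: "is_chain X m 0"
  by (simp add: is_chain_def)

lemma zero_simps[simp]: "is_chain X m (\<lambda>a. 0)" "supp (\<lambda>a. 0::int) = {}" "vol (\<lambda>a. 0::int) = 0"
   "bnd X (\<lambda>a. 0) = (\<lambda>a. 0)"
  by (simp_all add: is_chain_def supp_def vol_def bnd_def)

lemma is_chain_dl: "s \<in> cells X \<Longrightarrow> cdim X s = m \<Longrightarrow> is_chain X m (dl s)"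
  by (simp add: is_chain_def)

lemma is_chain_lift:
  assumes "finite (supp u)" "\<And>s. s \<in> supp u \<Longrightarrow> is_chain T j (F s)"
  shows "is_chain T j (lift F u)"
proof -
  have "finite (supp (lift F u))"
    using assms by (intro finite_supp_lift) (auto simp: is_chain_def)
  moreover have "\<forall>t\<in>supp (lift F u). t \<in> cells T \<and> cdim T t = j"
    using supp_lift[of F u] assms unfolding is_chain_def by blast
  ultimately show ?thesis by (simp add: is_chain_def)
qed

lemma cw_cinc:
  assumes "cw X" "s \<in> cells X"
  shows "finite (supp (cinc X s))" "bnd X (cinc X s) = 0"
    "\<And>t. t \<in> supp (cinc X s) \<Longrightarrow> t \<in> cells X \<and> cdim X t + 1 = cdim X s"
  using assms unfolding cw_def by (auto simp: zero_fun_def)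

lemma cw_cinc_chain:
  assumes "cw X" "s \<in> cells X" "cdim X s = Suc j"
  shows "is_chain X j (cinc X s)"
  using cw_cinc[OF assms(1,2)] assms(3) by (auto simp: is_chain_def)

lemma cw_edge:
  assumes "cw X" "e \<in> cells X" "cdim X e = 1"
  shows "cinc X e = dl (snd (cends X e)) - dl (fst (cends X e))"
    "fst (cends X e) \<in> verts X" "snd (cends X e) \<in> verts X"
  using assms unfolding cw_def by (auto simp: dl_def fun_eq_iff)

lemma bnd_add: "finite (supp u) \<Longrightarrow> finite (supp v) \<Longrightarrow> bnd X (u + v) = bnd X u + bnd X v"
  by (simp add: bnd_lift lift_add)

lemma bnd_diff: "finite (supp u) \<Longrightarrow> finite (supp v) \<Longrightarrow> bnd X (u - v) = bnd X u - bnd X v"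
  by (simp add: bnd_lift lift_diff)

lemma bnd_dl[simp]: "bnd X (dl s) = cinc X s"
  by (simp add: bnd_lift)

lemma bnd_lift_fam:
  assumes "finite (supp u)" "\<And>s. s \<in> supp u \<Longrightarrow> finite (supp (F s))"
  shows "bnd X (lift F u) = lift (\<lambda>s. bnd X (F s)) u"
  by (simp add: bnd_lift lift_assoc[OF assms])

lemma bnd_bnd:
  assumes "cw X" "is_chain X m u"
  shows "bnd X (bnd X u) = 0"
proof -
  have su: "\<And>s. s \<in> supp u \<Longrightarrow> s \<in> cells X" using assms(2) by (auto simp: is_chain_def)
  have "bnd X (bnd X u) = lift (\<lambda>s. bnd X (cinc X s)) u"
    unfolding bnd_lift[of X u]
    using assms su cw_cinc(1)[OF assms(1)] by (intro bnd_lift_fam) (auto simp: is_chain_def)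
  also have "\<dots> = lift (\<lambda>s. 0) u"
    using su cw_cinc(2)[OF assms(1)] by (intro lift_cong) auto
  finally show ?thesis by simp
qed

text \<open>Filling volume\<close>

lemma Inf_enat_in: "A \<noteq> {} \<Longrightarrow> Inf (A::enat set) \<in> A"
  unfolding Inf_enat_def by (auto intro: LeastI)

lemma FV_le_vol: "is_chain X m u \<Longrightarrow> bnd X u = z \<Longrightarrow> FV X m z \<le> enat (vol u)"
  unfolding FV_def by (rule INF_lower2[of u]) auto

lemma FV_le_ex:
  assumes "FV X m z \<le> enat B"
  shows "\<exists>u. is_chain X m u \<and> bnd X u = z \<and> vol u \<le> B"
proof -
  let ?U = "{u. is_chain X m u \<and> bnd X u = z}"
  have "?U \<noteq> {}"
  proof
    assume "?U = {}"
    then have "FV X m z = \<infinity>" unfolding FV_def by (metis INF_empty top_enat_def)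
    with assms show False by simp
  qed
  then have ne: "(\<lambda>u. enat (vol u)) ` ?U \<noteq> {}" by blast
  then have "FV X m z \<in> (\<lambda>u. enat (vol u)) ` ?U"
    unfolding FV_def by (rule Inf_enat_in)
  then obtain u where "u \<in> ?U" "FV X m z = enat (vol u)" by auto
  with assms show ?thesis by auto
qed

text \<open>Paths\<close>

lemma epath_verts: "epath X v p w \<Longrightarrow> v \<in> verts X \<and> w \<in> verts X"
proof (induction p arbitrary: v)
  case Nil then show ?case by (metis epath.simps(1))
next
  case (Cons a p) then show ?case by (metis epath.simps(2))
qed

lemma epath_append: "epath X v (p @ q) w \<longleftrightarrow> (\<exists>m. epath X v p m \<and> epath X m q w)"
  by (induction p arbitrary: v) (auto dest: epath_verts)

lemma epath_rev: "epath X v p w \<Longrightarrow> epath X w (rev_path p) v"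
proof (induction p arbitrary: v)
  case Nil then show ?case by (auto simp: rev_path_def)
next
  case (Cons eb p)
  obtain e b where eb: "eb = (e, b)" by fastforce
  have "epath X w (rev_path p) (etgt X eb)" using Cons by auto
  moreover have "epath X (etgt X eb) [(e, \<not> b)] v"
    using Cons.prems epath_verts[of X "etgt X eb" p w] by (auto simp: eb esrc_def etgt_def)
  moreover have "rev_path (eb # p) = rev_path p @ [(e, \<not> b)]"
    by (simp add: rev_path_def eb)
  ultimately show ?case
    by (auto simp: epath_append)
qed

lemma length_rev_path[simp]: "length (rev_path p) = length p"
  by (simp add: rev_path_def)

lemma epath_sub: "epath (sub X D) v p w \<Longrightarrow> D \<subseteq> cells X \<Longrightarrow> epath X v p w"
  by (induction p arbitrary: v) (auto simp: verts_def esrc_def etgt_def)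

lemma path_chain:
  assumes "cw X" "epath X v p w"
  shows "\<exists>u. is_chain X 1 u \<and> bnd X u = dl w - dl v \<and> vol u \<le> length p"
  using assms(2)
proof (induction p arbitrary: v)
  case Nil then show ?case by (intro exI[of _ 0]) (auto simp: bnd_lift)
next
  case (Cons eb p)
  obtain e b where eb: "eb = (e, b)" by fastforce
  from Cons.prems have e: "e \<in> cells X" "cdim X e = 1" and p: "epath X (etgt X eb) p w"
    and v: "esrc X eb = v" by (auto simp: eb)
  from Cons.IH[OF p] obtain u where u: "is_chain X 1 u" "bnd X u = dl w - dl (etgt X eb)"
    "vol u \<le> length p" by blast
  define c where "c = (if b then dl e else - dl e)"
  have cc: "is_chain X 1 c" using e by (auto simp: c_def intro: is_chain_dl)
  have vc: "vol c \<le> 1"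
    by (auto simp: c_def)
  have bc: "bnd X c = dl (etgt X eb) - dl v"
    using cw_edge(1)[OF assms(1) e] v
    by (auto simp: c_def eb esrc_def etgt_def)
  have "bnd X (u + c) = dl w - dl v"
    using u cc bc by (simp add: bnd_add is_chain_fin)
  moreover have "is_chain X 1 (u + c)" using u cc by (simp add: is_chain_add)
  moreover have "vol (u + c) \<le> length (eb # p)"
    using vol_add[of u c] u vc cc by (simp add: is_chain_fin)
  ultimately show ?case by blast
qed

lemma gdist_le: "epath X v p w \<Longrightarrow> gdist X v w \<le> length p"
  unfolding gdist_def by (rule Least_le) auto

lemma gdist_path: "path_connected X \<Longrightarrow> v \<in> verts X \<Longrightarrow> w \<in> verts X
   \<Longrightarrow> \<exists>p. epath X v p w \<and> length p = gdist X v w"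
  unfolding gdist_def path_connected_def by (rule LeastI_ex) blast

lemma gdist_sym: "path_connected X \<Longrightarrow> v \<in> verts X \<Longrightarrow> w \<in> verts X
   \<Longrightarrow> gdist X v w = gdist X w v"
proof -
  assume a: "path_connected X" "v \<in> verts X" "w \<in> verts X"
  have *: "gdist X b a \<le> gdist X a b" if ab: "a \<in> verts X" "b \<in> verts X" for a b
  proof -
    obtain p where "epath X a p b" "length p = gdist X a b" using gdist_path[OF a(1) ab] by blast
    then show ?thesis using gdist_le[OF epath_rev] by fastforce
  qed
  show ?thesis using *[of v w] *[of w v] a by simp
qed

lemma gdist_tri: "path_connected X \<Longrightarrow> a \<in> verts X \<Longrightarrow> b \<in> verts X \<Longrightarrow> c \<in> verts X
   \<Longrightarrow> gdist X a c \<le> gdist X a b + gdist X b c"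
proof -
  assume a: "path_connected X" "a \<in> verts X" "b \<in> verts X" "c \<in> verts X"
  obtain p where p: "epath X a p b" "length p = gdist X a b" using gdist_path a by metis
  obtain q where q: "epath X b q c" "length q = gdist X b c" using gdist_path a by metis
  have "epath X a (p @ q) c" using p q epath_append by fast
  then show ?thesis using gdist_le p q by fastforce
qed

lemma gdist_sub: "path_connected (sub X D) \<Longrightarrow> D \<subseteq> cells X \<Longrightarrow> v \<in> verts (sub X D)
   \<Longrightarrow> w \<in> verts (sub X D) \<Longrightarrow> gdist X v w \<le> gdist (sub X D) v w"
proof -
  assume a: "path_connected (sub X D)" "D \<subseteq> cells X" "v \<in> verts (sub X D)" "w \<in> verts (sub X D)"
  obtain p where p: "epath (sub X D) v p w" "length p = gdist (sub X D) v w"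
    using gdist_path[OF a(1,3,4)] by blast
  show ?thesis using gdist_le[OF epath_sub[OF p(1) a(2)]] p(2) by simp
qed

lemma gdist_path_chain:
  assumes "cw X" "path_connected X" "v \<in> verts X" "w \<in> verts X"
  shows "\<exists>u. is_chain X 1 u \<and> bnd X u = dl w - dl v \<and> vol u \<le> gdist X v w"
proof -
  obtain p where p: "epath X v p w" "length p = gdist X v w"
    using gdist_path[OF assms(2-4)] by blast
  show ?thesis using path_chain[OF assms(1) p(1)] p(2) by simp
qed



definition cmap_ok :: "'a cellcx \<Rightarrow> 'a set \<Rightarrow> 'b cellcx \<Rightarrow> 'b set \<Rightarrow> ('a \<Rightarrow> 'b)
   \<Rightarrow> (nat \<Rightarrow> 'a \<Rightarrow> 'b \<Rightarrow> int) \<Rightarrow> nat \<Rightarrow> nat \<Rightarrow> bool" where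
  "cmap_ok S Ds T Dt \<phi> F M i \<longleftrightarrow> (\<forall>s\<in>cells S. cdim S s = i \<longrightarrow>
      is_chain T i (F i s) \<and> (s \<in> Ds \<longrightarrow> is_chain (sub T Dt) i (F i s)) \<and> vol (F i s) \<le> M
      \<and> (i = 0 \<longrightarrow> F 0 s = dl (\<phi> s))
      \<and> (0 < i \<longrightarrow> bnd T (F i s) = lift (F (i - 1)) (cinc S s)))"

lemma cmap_chain_lift:
  assumes "cmap_ok S Ds T Dt \<phi> F M i" "is_chain S i u"
  shows "is_chain T i (lift (F i) u)"
  using assms unfolding cmap_ok_def
  by (intro is_chain_lift) (auto simp: is_chain_def)

lemma cmap_chain_lift_sub:
  assumes "cmap_ok S Ds T Dt \<phi> F M i" "is_chain S i u" "supp u \<subseteq> Ds"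
  shows "is_chain (sub T Dt) i (lift (F i) u)"
  using assms unfolding cmap_ok_def
  by (intro is_chain_lift) (auto simp: is_chain_def)

lemma cmap_vol_lift:
  assumes "cmap_ok S Ds T Dt \<phi> F M i" "is_chain S i u"
  shows "vol (lift (F i) u) \<le> M * vol u"
  using assms unfolding cmap_ok_def
  by (intro vol_lift) (auto simp: is_chain_def)

lemma cmap_bnd_lift:
  assumes "cmap_ok S Ds T Dt \<phi> F M i" "0 < i" "is_chain S i u" "cw S"
  shows "bnd T (lift (F i) u) = lift (F (i - 1)) (bnd S u)"
proof -
  have su: "\<And>s. s \<in> supp u \<Longrightarrow> s \<in> cells S \<and> cdim S s = i" using assms(3) by (auto simp: is_chain_def)
  have "bnd T (lift (F i) u) = lift (\<lambda>s. bnd T (F i s)) u"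
    using assms su by (intro bnd_lift_fam) (auto simp: is_chain_def cmap_ok_def)
  also have "\<dots> = lift (\<lambda>s. lift (F (i - 1)) (cinc S s)) u"
    using assms su by (intro lift_cong) (auto simp: cmap_ok_def)
  also have "\<dots> = lift (F (i - 1)) (lift (cinc S) u)"
    using assms su cw_cinc(1)[OF assms(4)] by (intro lift_assoc[symmetric]) (auto simp: is_chain_def)
  finally show ?thesis by (simp add: bnd_lift)
qed

lemma chain_map_exists:
  assumes cwS: "cw S" and cwT: "cw T" and DtT: "Dt \<subseteq> cells T"
    and Ds: "\<And>s. s \<in> Ds \<Longrightarrow> supp (cinc S s) \<subseteq> Ds"
    and vx: "\<And>v. v \<in> cells S \<Longrightarrow> cdim S v = 0 \<Longrightarrow>
               \<phi> v \<in> cells T \<and> cdim T (\<phi> v) = 0 \<and> (v \<in> Ds \<longrightarrow> \<phi> v \<in> Dt)"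
    and ed: "\<And>e. e \<in> cells S \<Longrightarrow> cdim S e = 1 \<Longrightarrow> \<exists>u. is_chain T 1 u
               \<and> (e \<in> Ds \<longrightarrow> is_chain (sub T Dt) 1 u)
               \<and> bnd T u = dl (\<phi> (snd (cends S e))) - dl (\<phi> (fst (cends S e))) \<and> vol u \<le> L"
    and rb: "\<And>s. s \<in> cells S \<Longrightarrow> cdim S s \<le> k \<Longrightarrow> vol (cinc S s) \<le> r"
    and dT: "\<And>j n. 1 \<le> j \<Longrightarrow> j < k \<Longrightarrow> \<exists>B. \<forall>z. is_cycle T j z \<and> vol z \<le> n \<longrightarrow> FV T (Suc j) z \<le> enat B"
    and dTD: "\<And>j n. 1 \<le> j \<Longrightarrow> j < k \<Longrightarrow> \<exists>B. \<forall>z. is_cycle (sub T Dt) j z \<and> vol z \<le> n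
                 \<longrightarrow> FV (sub T Dt) (Suc j) z \<le> enat B"
  shows "\<exists>F M. \<forall>i\<le>k. cmap_ok S Ds T Dt \<phi> F M i"
proof -
  have "j \<le> k \<longrightarrow> (\<exists>F M. \<forall>i\<le>j. cmap_ok S Ds T Dt \<phi> F M i)" for j
  proof (induction j)
    case 0
    have "cmap_ok S Ds T Dt \<phi> (\<lambda>i s. dl (\<phi> s)) 1 0"
      unfolding cmap_ok_def using vx by (auto intro: is_chain_dl)
    then show ?case by auto
  next
    case (Suc j)
    show ?case
    proof
      assume jk: "Suc j \<le> k"
      then obtain F M where FM: "\<And>i. i \<le> j \<Longrightarrow> cmap_ok S Ds T Dt \<phi> F M i" using Suc by auto
      have FMj: "cmap_ok S Ds T Dt \<phi> F M j" using FM by simp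
      have ex: "\<exists>B. \<forall>s\<in>cells S. cdim S s = Suc j \<longrightarrow> (\<exists>u. is_chain T (Suc j) u
          \<and> (s \<in> Ds \<longrightarrow> is_chain (sub T Dt) (Suc j) u)
          \<and> bnd T u = lift (F j) (cinc S s) \<and> vol u \<le> B)"
      proof (cases "j = 0")
        case True
        have "\<forall>s\<in>cells S. cdim S s = Suc j \<longrightarrow> (\<exists>u. is_chain T (Suc j) u
          \<and> (s \<in> Ds \<longrightarrow> is_chain (sub T Dt) (Suc j) u)
          \<and> bnd T u = lift (F j) (cinc S s) \<and> vol u \<le> L)"
        proof (intro ballI impI)
          fix e assume e: "e \<in> cells S" "cdim S e = Suc j"
          then have e1: "cdim S e = 1" using True by simp
          have "lift (F 0) (cinc S e) = lift (\<lambda>s. dl (\<phi> s)) (cinc S e)"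
          proof (rule lift_cong)
            fix s assume "s \<in> supp (cinc S e)"
            then have "s \<in> cells S" "cdim S s = 0" using cw_cinc(3)[OF cwS e(1)] e1 by auto
            then show "F 0 s = dl (\<phi> s)" using FM[of 0] unfolding cmap_ok_def by auto
          qed
          also have "\<dots> = dl (\<phi> (snd (cends S e))) - dl (\<phi> (fst (cends S e)))"
            by (simp add: cw_edge(1)[OF cwS e(1) e1] lift_diff)
          finally show "\<exists>u. is_chain T (Suc j) u
            \<and> (e \<in> Ds \<longrightarrow> is_chain (sub T Dt) (Suc j) u)
            \<and> bnd T u = lift (F j) (cinc S e) \<and> vol u \<le> L"
            using ed[OF e(1) e1] True by auto
        qed
        then show ?thesis by blast
      next
        case False
        have j1: "1 \<le> j" "j < k" using False jk by auto
        obtain B1 where B1: "\<And>z. is_cycle T j z \<Longrightarrow> vol z \<le> M * r \<Longrightarrow> FV T (Suc j) z \<le> enat B1"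
          using dT[OF j1] by blast
        obtain B2 where B2: "\<And>z. is_cycle (sub T Dt) j z \<Longrightarrow> vol z \<le> M * r
            \<Longrightarrow> FV (sub T Dt) (Suc j) z \<le> enat B2"
          using dTD[OF j1] by blast
        have "\<forall>s\<in>cells S. cdim S s = Suc j \<longrightarrow> (\<exists>u. is_chain T (Suc j) u
          \<and> (s \<in> Ds \<longrightarrow> is_chain (sub T Dt) (Suc j) u)
          \<and> bnd T u = lift (F j) (cinc S s) \<and> vol u \<le> max B1 B2)"
        proof (intro ballI impI)
          fix s assume s: "s \<in> cells S" "cdim S s = Suc j"
          define c where "c = lift (F j) (cinc S s)"
          have cs: "is_chain S j (cinc S s)" using cw_cinc_chain[OF cwS s] .
          have cc: "is_chain T j c" unfolding c_def using cmap_chain_lift[OF FMj cs] by simp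
          have bc: "bnd T c = 0"
            unfolding c_def using cmap_bnd_lift[OF FMj _ cs cwS] False cw_cinc(2)[OF cwS s(1)] by simp
          have "vol (cinc S s) \<le> r" using rb[of s] s jk by simp
          then have "M * vol (cinc S s) \<le> M * r" by (rule mult_le_mono2)
          then have vc: "vol c \<le> M * r"
            unfolding c_def using cmap_vol_lift[OF FMj cs] by (rule le_trans[rotated])
          show "\<exists>u. is_chain T (Suc j) u
            \<and> (s \<in> Ds \<longrightarrow> is_chain (sub T Dt) (Suc j) u)
            \<and> bnd T u = lift (F j) (cinc S s) \<and> vol u \<le> max B1 B2"
          proof (cases "s \<in> Ds")
            case True
            have cD: "is_chain (sub T Dt) j c"
              unfolding c_def using cmap_chain_lift_sub[OF FMj cs Ds[OF True]] by simp
            have "FV (sub T Dt) (Suc j) c \<le> enat B2"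
              using B2[OF _ vc] cD bc by (simp add: is_cycle_def zero_fun_def)
            then obtain u where u: "is_chain (sub T Dt) (Suc j) u" "bnd T u = c" "vol u \<le> B2"
              using FV_le_ex[of "sub T Dt"] by fastforce
            then show ?thesis using is_chain_sub_X[OF u(1) DtT] c_def by auto
          next
            case False
            have "FV T (Suc j) c \<le> enat B1"
              using B1[OF _ vc] cc bc by (simp add: is_cycle_def zero_fun_def)
            then obtain u where u: "is_chain T (Suc j) u" "bnd T u = c" "vol u \<le> B1"
              using FV_le_ex[of T] by fastforce
            then show ?thesis using False c_def by auto
          qed
        qed
        then show ?thesis by blast
      qed
      then obtain B where B: "\<And>s. s \<in> cells S \<Longrightarrow> cdim S s = Suc j \<Longrightarrow> (\<exists>u. is_chain T (Suc j) u
          \<and> (s \<in> Ds \<longrightarrow> is_chain (sub T Dt) (Suc j) u)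
          \<and> bnd T u = lift (F j) (cinc S s) \<and> vol u \<le> B)" by blast
      define G where "G = (\<lambda>s. SOME u. is_chain T (Suc j) u
          \<and> (s \<in> Ds \<longrightarrow> is_chain (sub T Dt) (Suc j) u)
          \<and> bnd T u = lift (F j) (cinc S s) \<and> vol u \<le> B)"
      have G: "\<And>s. s \<in> cells S \<Longrightarrow> cdim S s = Suc j \<Longrightarrow> is_chain T (Suc j) (G s)
          \<and> (s \<in> Ds \<longrightarrow> is_chain (sub T Dt) (Suc j) (G s))
          \<and> bnd T (G s) = lift (F j) (cinc S s) \<and> vol (G s) \<le> B"
      proof -
        fix s assume a: "s \<in> cells S" "cdim S s = Suc j"
        obtain u where "is_chain T (Suc j) u
          \<and> (s \<in> Ds \<longrightarrow> is_chain (sub T Dt) (Suc j) u)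
          \<and> bnd T u = lift (F j) (cinc S s) \<and> vol u \<le> B" using B[OF a] by blast
        then show "is_chain T (Suc j) (G s)
          \<and> (s \<in> Ds \<longrightarrow> is_chain (sub T Dt) (Suc j) (G s))
          \<and> bnd T (G s) = lift (F j) (cinc S s) \<and> vol (G s) \<le> B"
          unfolding G_def by (rule someI[of "\<lambda>u. is_chain T (Suc j) u
          \<and> (s \<in> Ds \<longrightarrow> is_chain (sub T Dt) (Suc j) u)
          \<and> bnd T u = lift (F j) (cinc S s) \<and> vol u \<le> B"])
      qed
      define F' where "F' = F(Suc j := G)"
      have "cmap_ok S Ds T Dt \<phi> F' (max M B) i" if "i \<le> Suc j" for i
      proof (cases "i = Suc j")
        case True
        show ?thesis unfolding cmap_ok_def
        proof (intro ballI impI)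
          fix s assume a: "s \<in> cells S" "cdim S s = i"
          then have a': "cdim S s = Suc j" using True by simp
          have F1: "F' i = G" "F' (i - 1) = F j" using True by (simp_all add: F'_def)
          have "vol (G s) \<le> max M B" using G[OF a(1) a'] by (simp add: le_max_iff_disj)
          then show "is_chain T i (F' i s) \<and> (s \<in> Ds \<longrightarrow> is_chain (sub T Dt) i (F' i s))
             \<and> vol (F' i s) \<le> max M B \<and> (i = 0 \<longrightarrow> F' 0 s = dl (\<phi> s))
             \<and> (0 < i \<longrightarrow> bnd T (F' i s) = lift (F' (i - 1)) (cinc S s))"
            using G[OF a(1) a'] True F1 by simp
        qed
      next
        case False
        then have ij: "i \<le> j" using that by simp
        have F1: "F' i = F i" "F' (i - 1) = F (i - 1)" using ij by (auto simp: F'_def)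
        show ?thesis unfolding cmap_ok_def
        proof (intro ballI impI)
          fix s assume a: "s \<in> cells S" "cdim S s = i"
          have "vol (F i s) \<le> max M B" using FM[OF ij] a unfolding cmap_ok_def
            by (simp add: le_max_iff_disj)
          then show "is_chain T i (F' i s) \<and> (s \<in> Ds \<longrightarrow> is_chain (sub T Dt) i (F' i s))
             \<and> vol (F' i s) \<le> max M B \<and> (i = 0 \<longrightarrow> F' 0 s = dl (\<phi> s))
             \<and> (0 < i \<longrightarrow> bnd T (F' i s) = lift (F' (i - 1)) (cinc S s))"
            using FM[OF ij] a F1 unfolding cmap_ok_def by (cases "i = 0") auto
        qed
      qed
      then show "\<exists>F M. \<forall>i\<le>Suc j. cmap_ok S Ds T Dt \<phi> F M i" by blast
    qed
  qed
  then show ?thesis by blast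
qed



definition hterm :: "'a cellcx \<Rightarrow> (nat \<Rightarrow> 'a \<Rightarrow> 'a \<Rightarrow> int) \<Rightarrow> nat \<Rightarrow> 'a \<Rightarrow> 'a \<Rightarrow> int" where
  "hterm S H i s = (if i = 0 then 0 else lift (H (i - 1)) (cinc S s))"

definition hom_ok :: "'a cellcx \<Rightarrow> (nat \<Rightarrow> 'a \<Rightarrow> 'a \<Rightarrow> int) \<Rightarrow> (nat \<Rightarrow> 'a \<Rightarrow> 'a \<Rightarrow> int)
    \<Rightarrow> nat \<Rightarrow> nat \<Rightarrow> bool" where
  "hom_ok S G H M i \<longleftrightarrow> (\<forall>s\<in>cells S. cdim S s = i \<longrightarrow>
      is_chain S (Suc i) (H i s) \<and> vol (H i s) \<le> M
      \<and> bnd S (H i s) = dl s - G i s - hterm S H i s)"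

lemma hom_bnd_lift:
  assumes cwS: "cw S" and h: "hom_ok S G H M i" and u: "is_chain S i u"
    and G: "\<And>s. s \<in> supp u \<Longrightarrow> finite (supp (G i s))"
  shows "bnd S (lift (H i) u) = u - lift (G i) u - (if i = 0 then 0 else lift (H (i - 1)) (bnd S u))"
proof -
  have su: "\<And>s. s \<in> supp u \<Longrightarrow> s \<in> cells S \<and> cdim S s = i" using u by (auto simp: is_chain_def)
  have fu: "finite (supp u)" using u by (simp add: is_chain_def)
  have "bnd S (lift (H i) u) = lift (\<lambda>s. bnd S (H i s)) u"
    using h su fu by (intro bnd_lift_fam) (auto simp: is_chain_def hom_ok_def)
  also have "\<dots> = lift (\<lambda>s. (dl s - G i s) - hterm S H i s) u"
    using h su by (intro lift_cong) (auto simp: hom_ok_def)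
  also have "\<dots> = u - lift (G i) u - lift (hterm S H i) u"
    by (simp add: lift_fam_diff lift_dl_id[OF fu])
  also have "lift (hterm S H i) u = (if i = 0 then 0 else lift (H (i - 1)) (bnd S u))"
  proof (cases "i = 0")
    case True
    have "hterm S H i = (\<lambda>s. 0)" using True by (simp add: hterm_def fun_eq_iff)
    then show ?thesis using True by simp
  next
    case False
    have "lift (hterm S H i) u = lift (\<lambda>s. lift (H (i - 1)) (cinc S s)) u"
      using False by (intro lift_cong) (simp add: hterm_def)
    also have "\<dots> = lift (H (i - 1)) (lift (cinc S) u)"
      using fu su cw_cinc(1)[OF cwS] by (intro lift_assoc[symmetric]) auto
    finally show ?thesis using False by (simp add: bnd_lift)
  qed
  finally show ?thesis .
qed

lemma homotopy_exists:
  assumes cwS: "cw S"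
    and G: "\<And>i. i \<le> k \<Longrightarrow> cmap_ok S Ds S Dt \<psi> G MG i"
    and pth: "\<And>v. v \<in> cells S \<Longrightarrow> cdim S v = 0 \<Longrightarrow>
        \<exists>u. is_chain S 1 u \<and> bnd S u = dl v - dl (\<psi> v) \<and> vol u \<le> L"
    and rb: "\<And>s. s \<in> cells S \<Longrightarrow> cdim S s \<le> k \<Longrightarrow> vol (cinc S s) \<le> r"
    and dS: "\<And>j n. 1 \<le> j \<Longrightarrow> j < k \<Longrightarrow> \<exists>B. \<forall>z. is_cycle S j z \<and> vol z \<le> n \<longrightarrow> FV S (Suc j) z \<le> enat B"
  shows "\<exists>H M. \<forall>i<k. hom_ok S G H M i"
proof -
  have Gc: "\<And>i s. i \<le> k \<Longrightarrow> s \<in> cells S \<Longrightarrow> cdim S s = i \<Longrightarrow> is_chain S i (G i s) \<and> vol (G i s) \<le> MG"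
    using G unfolding cmap_ok_def by blast
  have "j < k \<longrightarrow> (\<exists>H M. \<forall>i\<le>j. hom_ok S G H M i)" for j
  proof (induction j)
    case 0
    show ?case
    proof
      assume k: "0 < k"
      define P where "P = (\<lambda>v u. is_chain S 1 u \<and> bnd S u = dl v - dl (\<psi> v) \<and> vol u \<le> L)"
      define H0 where "H0 = (\<lambda>v. SOME u. P v u)"
      have H0: "P v (H0 v)" if vv: "v \<in> cells S" "cdim S v = 0" for v
      proof -
        obtain u where "P v u" using pth[OF vv] unfolding P_def by blast
        then show ?thesis unfolding H0_def by (rule someI[of "P v"])
      qed
      have "hom_ok S G (\<lambda>i. H0) L 0"
        unfolding hom_ok_def
      proof (intro ballI impI)
        fix s assume s: "s \<in> cells S" "cdim S s = 0"
        have "G 0 s = dl (\<psi> s)" using G[of 0] s by (simp add: cmap_ok_def)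
        then show "is_chain S (Suc 0) (H0 s) \<and> vol (H0 s) \<le> L \<and>
            bnd S (H0 s) = dl s - G 0 s - hterm S (\<lambda>i. H0) 0 s"
          using H0[OF s] by (simp add: P_def hterm_def)
      qed
      then show "\<exists>H M. \<forall>i\<le>0. hom_ok S G H M i" by auto
    qed
  next
    case (Suc j)
    show ?case
    proof
      assume jk: "Suc j < k"
      then obtain H M where HM: "\<And>i. i \<le> j \<Longrightarrow> hom_ok S G H M i" using Suc by auto
      have HMj: "hom_ok S G H M j" using HM by simp
      obtain B where B: "\<And>z. is_cycle S (Suc j) z \<Longrightarrow> vol z \<le> 1 + MG + M * r
          \<Longrightarrow> FV S (Suc (Suc j)) z \<le> enat B"
        using dS[of "Suc j" "1 + MG + M * r"] jk by auto
      define P where "P = (\<lambda>s u. is_chain S (Suc (Suc j)) u \<and> vol u \<le> B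
          \<and> bnd S u = dl s - G (Suc j) s - hterm S H (Suc j) s)"
      have ex: "\<exists>u. P s u" if s: "s \<in> cells S" "cdim S s = Suc j" for s
      proof -
        define c where "c = dl s - G (Suc j) s - lift (H j) (cinc S s)"
        have cs: "is_chain S j (cinc S s)" using cw_cinc_chain[OF cwS s] .
        have Gs: "is_chain S (Suc j) (G (Suc j) s)" "vol (G (Suc j) s) \<le> MG"
          using Gc[of "Suc j" s] s jk by auto
        have Hc: "is_chain S (Suc j) (lift (H j) (cinc S s))"
          using HMj cs by (intro is_chain_lift) (auto simp: is_chain_def hom_ok_def)
        have Hv: "vol (lift (H j) (cinc S s)) \<le> M * vol (cinc S s)"
          using HMj cs by (intro vol_lift) (auto simp: is_chain_def hom_ok_def)
        have "vol (cinc S s) \<le> r" using rb[of s] s jk by simp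
        then have "M * vol (cinc S s) \<le> M * r" by (rule mult_le_mono2)
        then have Hv': "vol (lift (H j) (cinc S s)) \<le> M * r" using Hv by linarith
        have cc: "is_chain S (Suc j) c"
          unfolding c_def using s Gs Hc by (intro is_chain_diff is_chain_dl) auto
        have "vol c \<le> vol (dl s - G (Suc j) s) + vol (lift (H j) (cinc S s))"
          unfolding c_def using s Gs Hc
          by (intro vol_diff) (auto intro: is_chain_fin is_chain_diff is_chain_dl)
        also have "vol (dl s - G (Suc j) s) \<le> 1 + MG"
          using vol_diff[of "dl s" "G (Suc j) s"] Gs is_chain_fin by fastforce
        finally have vc: "vol c \<le> 1 + MG + M * r" using Hv' by linarith
        have Gj: "\<And>t. t \<in> supp (cinc S s) \<Longrightarrow> finite (supp (G j t))"
          using cs Gc[of j] jk by (auto simp: is_chain_def)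
        have bH: "bnd S (lift (H j) (cinc S s)) = cinc S s - lift (G j) (cinc S s)"
          using hom_bnd_lift[OF cwS HMj cs Gj] cw_cinc(2)[OF cwS s(1)] by simp
        have bG: "bnd S (G (Suc j) s) = lift (G j) (cinc S s)"
          using G[of "Suc j"] s jk by (simp add: cmap_ok_def)
        have fd: "finite (supp (dl s - G (Suc j) s))"
          using s Gs by (intro is_chain_fin[of S "Suc j"] is_chain_diff is_chain_dl) auto
        have "bnd S c = bnd S (dl s - G (Suc j) s) - bnd S (lift (H j) (cinc S s))"
          unfolding c_def by (rule bnd_diff[OF fd is_chain_fin[OF Hc]])
        also have "bnd S (dl s - G (Suc j) s) = cinc S s - lift (G j) (cinc S s)"
          using bnd_diff[of "dl s" "G (Suc j) s" S] is_chain_fin[OF Gs(1)] bG by simp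
        finally have "bnd S c = cinc S s - lift (G j) (cinc S s) - bnd S (lift (H j) (cinc S s))" .
        then have bc: "bnd S c = 0" using bH by simp
        have "FV S (Suc (Suc j)) c \<le> enat B"
          using B[OF _ vc] cc bc by (simp add: is_cycle_def zero_fun_def)
        then obtain u where u: "is_chain S (Suc (Suc j)) u" "bnd S u = c" "vol u \<le> B"
          using FV_le_ex[of S] by fastforce
        then show ?thesis unfolding P_def c_def hterm_def by auto
      qed
      define H' where "H' = H(Suc j := (\<lambda>s. SOME u. P s u))"
      have "hom_ok S G H' (max M B) i" if "i \<le> Suc j" for i
      proof (cases "i = Suc j")
        case True
        show ?thesis unfolding hom_ok_def
        proof (intro ballI impI)
          fix s assume a: "s \<in> cells S" "cdim S s = i"
          then have a': "cdim S s = Suc j" using True by simp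
          have Ps: "P s (SOME u. P s u)" using ex[OF a(1) a'] by (rule someI_ex)
          have hh: "hterm S H' i s = hterm S H (Suc j) s" using True by (simp add: hterm_def H'_def)
          have "vol (H' i s) \<le> max M B" using Ps True by (simp add: P_def H'_def le_max_iff_disj)
          then show "is_chain S (Suc i) (H' i s) \<and> vol (H' i s) \<le> max M B
             \<and> bnd S (H' i s) = dl s - G i s - hterm S H' i s"
            using Ps True hh by (simp add: P_def H'_def)
        qed
      next
        case False
        then have ij: "i \<le> j" using that by simp
        have F1: "H' i = H i" "H' (i - 1) = H (i - 1)" using ij by (auto simp: H'_def)
        have hh: "hterm S H' i = hterm S H i" unfolding hterm_def F1(2) by (rule refl)
        show ?thesis unfolding hom_ok_def
        proof (intro ballI impI)
          fix s assume a: "s \<in> cells S" "cdim S s = i"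
          have "vol (H i s) \<le> max M B" using HM[OF ij] a unfolding hom_ok_def
            by (simp add: le_max_iff_disj)
          then show "is_chain S (Suc i) (H' i s) \<and> vol (H' i s) \<le> max M B
             \<and> bnd S (H' i s) = dl s - G i s - hterm S H' i s"
            using HM[OF ij] a F1 hh unfolding hom_ok_def by auto
        qed
      qed
      then show "\<exists>H M. \<forall>i\<le>Suc j. hom_ok S G H M i" by blast
    qed
  qed
  then show ?thesis by (metis Suc_leI less_Suc_eq_le not0_implies_Suc not_less0 le_eq_less_or_eq)
qed



lemma cmap_comp:
  assumes cw2: "cw (sub X2 D2)" and cw1: "cw X1"
    and F: "cmap_ok X1 D1 X2 D2 \<phi> F MF i" "i = 0 \<or> cmap_ok X1 D1 X2 D2 \<phi> F MF (i - 1)"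
    and G: "cmap_ok (sub X2 D2) D2 (sub X1 D1) D1 \<psi> G MG i"
    and D1: "D1 \<subseteq> cells X1"
  shows "cmap_ok (sub X1 D1) D1 (sub X1 D1) D1 (\<psi> \<circ> \<phi>) (\<lambda>i s. lift (G i) (F i s)) (MG * MF) i"
  unfolding cmap_ok_def
proof (intro ballI impI)
  fix s assume s: "s \<in> cells (sub X1 D1)" "cdim (sub X1 D1) s = i"
  then have s1: "s \<in> cells X1" "cdim X1 s = i" "s \<in> D1" using D1 by auto
  have Fs: "is_chain (sub X2 D2) i (F i s)" "vol (F i s) \<le> MF"
    using F(1) s1 unfolding cmap_ok_def by auto
  have c: "is_chain (sub X1 D1) i (lift (G i) (F i s))"
    using cmap_chain_lift[OF G Fs(1)] by simp
  have v: "vol (lift (G i) (F i s)) \<le> MG * MF"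
    using cmap_vol_lift[OF G Fs(1)] Fs(2) by (meson le_trans mult_le_mono2)
  have z: "i = 0 \<longrightarrow> lift (G 0) (F 0 s) = dl ((\<psi> \<circ> \<phi>) s)"
  proof
    assume i: "i = 0"
    then have "F 0 s = dl (\<phi> s)" using F(1) s1 unfolding cmap_ok_def by auto
    moreover have "\<phi> s \<in> cells (sub X2 D2)" "cdim (sub X2 D2) (\<phi> s) = 0"
      using Fs(1) i \<open>F 0 s = dl (\<phi> s)\<close> by (auto simp: is_chain_def)
    ultimately show "lift (G 0) (F 0 s) = dl ((\<psi> \<circ> \<phi>) s)"
      using G i unfolding cmap_ok_def by auto
  qed
  have b: "0 < i \<longrightarrow> bnd (sub X1 D1) (lift (G i) (F i s))
      = lift (\<lambda>s. lift (G (i - 1)) (F (i - 1) s)) (cinc (sub X1 D1) s)"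
  proof
    assume i: "0 < i"
    have F1: "cmap_ok X1 D1 X2 D2 \<phi> F MF (i - 1)" using F(2) i by simp
    have "cdim X1 s = Suc (i - 1)" using s1 i by simp
    then have cs: "is_chain X1 (i - 1) (cinc X1 s)" using cw_cinc_chain[OF cw1 s1(1)] by blast
    have "bnd (sub X1 D1) (lift (G i) (F i s)) = lift (G (i - 1)) (bnd (sub X2 D2) (F i s))"
      using cmap_bnd_lift[OF G i Fs(1) cw2] by simp
    also have "bnd (sub X2 D2) (F i s) = lift (F (i - 1)) (cinc X1 s)"
      using F(1) s1 i unfolding cmap_ok_def by auto
    also have "lift (G (i - 1)) (lift (F (i - 1)) (cinc X1 s))
        = lift (\<lambda>s. lift (G (i - 1)) (F (i - 1) s)) (cinc X1 s)"
      using cs F1 by (intro lift_assoc) (auto simp: is_chain_def cmap_ok_def)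
    finally show "bnd (sub X1 D1) (lift (G i) (F i s))
      = lift (\<lambda>s. lift (G (i - 1)) (F (i - 1) s)) (cinc (sub X1 D1) s)" by simp
  qed
  show "is_chain (sub X1 D1) i (lift (G i) (F i s)) \<and>
       (s \<in> D1 \<longrightarrow> is_chain (sub (sub X1 D1) D1) i (lift (G i) (F i s))) \<and>
       vol (lift (G i) (F i s)) \<le> MG * MF \<and>
       (i = 0 \<longrightarrow> lift (G 0) (F 0 s) = dl ((\<psi> \<circ> \<phi>) s)) \<and>
       (0 < i \<longrightarrow> bnd (sub X1 D1) (lift (G i) (F i s))
          = lift (\<lambda>s. lift (G (i - 1)) (F (i - 1) s)) (cinc (sub X1 D1) s))"
    using c v z b by simp
qed



lemma VolD_ge:
  "is_cycle (sub X D) (k - 1) z \<Longrightarrow> FV X k z \<le> enat n \<Longrightarrow> FV (sub X D) k z \<le> VolD X D k n"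
  unfolding VolD_def by (rule SUP_upper) auto

lemma VolD_mono: "n \<le> m \<Longrightarrow> VolD X D k n \<le> VolD X D k m"
  unfolding VolD_def by (rule SUP_subset_mono) (auto intro: order.trans)

lemma dir_core:
  assumes k: "1 \<le> k" and cw1: "cw X1" and cw2: "cw X2" and cw1s: "cw (sub X1 D1)"
    and cw2s: "cw (sub X2 D2)" and D1: "D1 \<subseteq> cells X1" and D2: "D2 \<subseteq> cells X2"
    and rX1: "\<And>s. s \<in> cells X1 \<Longrightarrow> cdim X1 s \<le> k \<Longrightarrow> vol (cinc X1 s) \<le> r"
    and F: "\<And>i. i \<le> k \<Longrightarrow> cmap_ok X1 D1 X2 D2 \<phi> F MF i"
    and G: "\<And>i. i \<le> k \<Longrightarrow> cmap_ok (sub X2 D2) D2 (sub X1 D1) D1 \<psi> G MG i"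
    and H: "\<And>i. i < k \<Longrightarrow> hom_ok (sub X1 D1) (\<lambda>i s. lift (G i) (F i s)) H MH i"
  shows "VolD X1 D1 k \<preceq>\<^sub>f VolD X2 D2 k"
proof -
  define C where "C = max (max MF MG) (MH * r) + 1"
  have C: "C > 0" "MF \<le> C" "MG \<le> C" "MH * r \<le> C" by (auto simp: C_def)
  have main: "FV (sub X1 D1) k z \<le> enat C * VolD X2 D2 k (C * n + C) + enat (C * n + C)"
    if z: "is_cycle (sub X1 D1) (k - 1) z" "FV X1 k z \<le> enat n" for z n
  proof -
    obtain u where u: "is_chain X1 k u" "bnd X1 u = z" "vol u \<le> n"
      using FV_le_ex[OF z(2)] by blast
    have zc: "is_chain (sub X1 D1) (k - 1) z" using z by (simp add: is_cycle_def)
    have zX: "is_chain X1 (k - 1) z" using is_chain_sub_X[OF zc D1] .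
    have zD: "supp z \<subseteq> D1" using is_chain_sub_supp[OF zc] .
    have zb: "bnd X1 z = 0" using z by (simp add: is_cycle_def zero_fun_def)
    have "vol z \<le> r * vol u"
      unfolding u(2)[symmetric] bnd_lift
      using u(1) rX1 cw_cinc(1)[OF cw1] by (intro vol_lift) (auto simp: is_chain_def)
    then have vz: "vol z \<le> r * n" using u(3) by (meson le_trans mult_le_mono2)
    define fz where "fz = lift (F (k - 1)) z"
    define fu where "fu = lift (F k) u"
    have Fk: "cmap_ok X1 D1 X2 D2 \<phi> F MF k" and Fk1: "cmap_ok X1 D1 X2 D2 \<phi> F MF (k - 1)"
      using F by auto
    have fzc: "is_chain (sub X2 D2) (k - 1) fz"
      unfolding fz_def using cmap_chain_lift_sub[OF Fk1 zX zD] .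
    have fuc: "is_chain X2 k fu" unfolding fu_def using cmap_chain_lift[OF Fk u(1)] .
    have fub: "bnd X2 fu = fz" unfolding fu_def fz_def
      using cmap_bnd_lift[OF Fk _ u(1) cw1] k u(2) by simp
    have fuv: "vol fu \<le> MF * n"
      unfolding fu_def using cmap_vol_lift[OF Fk u(1)] u(3) by (meson le_trans mult_le_mono2)
    have "bnd X2 fz = 0" using bnd_bnd[OF cw2 fuc] fub by simp
    then have fzcy: "is_cycle (sub X2 D2) (k - 1) fz"
      using fzc by (simp add: is_cycle_def zero_fun_def)
    have "FV X2 k fz \<le> enat (MF * n)"
      using FV_le_vol[OF fuc fub] fuv by (meson enat_ord_simps(1) order_trans)
    also have "MF * n \<le> C * n + C" using C(2) by (meson mult_le_mono1 trans_le_add1)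
    finally have "FV X2 k fz \<le> enat (C * n + C)" by simp
    then have V: "FV (sub X2 D2) k fz \<le> VolD X2 D2 k (C * n + C)"
      using VolD_ge[OF fzcy] by blast
    show ?thesis
    proof (cases "VolD X2 D2 k (C * n + C)")
      case infinity
      then show ?thesis using C(1) by (simp add: enat_0_iff)
    next
      case (enat v)
      then obtain w where w: "is_chain (sub X2 D2) k w" "bnd X2 w = fz" "vol w \<le> v"
        using FV_le_ex[of "sub X2 D2" k fz v] V by auto
      have Gk: "cmap_ok (sub X2 D2) D2 (sub X1 D1) D1 \<psi> G MG k" using G by auto
      have Gk1: "cmap_ok (sub X2 D2) D2 (sub X1 D1) D1 \<psi> G MG (k - 1)" using G by auto
      define gw where "gw = lift (G k) w"
      define hz where "hz = lift (H (k - 1)) z"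
      have gwc: "is_chain (sub X1 D1) k gw" unfolding gw_def using cmap_chain_lift[OF Gk w(1)] .
      have gwv: "vol gw \<le> MG * v" unfolding gw_def using cmap_vol_lift[OF Gk w(1)] w(3)
        by (meson le_trans mult_le_mono2)
      have "bnd X1 gw = lift (G (k - 1)) fz" unfolding gw_def
        using cmap_bnd_lift[OF Gk _ w(1) cw2s] k w(2) by simp
      also have "\<dots> = lift (\<lambda>s. lift (G (k - 1)) (F (k - 1) s)) z"
        unfolding fz_def using zX Fk1 by (intro lift_assoc) (auto simp: is_chain_def cmap_ok_def)
      finally have gwb: "bnd X1 gw = lift (\<lambda>s. lift (G (k - 1)) (F (k - 1) s)) z" .
      have Hk: "hom_ok (sub X1 D1) (\<lambda>i s. lift (G i) (F i s)) H MH (k - 1)" using H k by simp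
      have hzc: "is_chain (sub X1 D1) k hz" unfolding hz_def
        using Hk zc k by (intro is_chain_lift) (auto simp: is_chain_def hom_ok_def)
      have hzv: "vol hz \<le> MH * vol z" unfolding hz_def
        using Hk zc by (intro vol_lift) (auto simp: is_chain_def hom_ok_def)
      have fin: "\<And>s. s \<in> supp z \<Longrightarrow> finite (supp (lift (G (k - 1)) (F (k - 1) s)))"
        using Fk1 Gk1 zX zD by (intro finite_supp_lift) (auto simp: is_chain_def cmap_ok_def)
      have hzb: "bnd X1 hz = z - lift (\<lambda>s. lift (G (k - 1)) (F (k - 1) s)) z"
        using hom_bnd_lift[OF cw1s Hk zc fin] zb unfolding hz_def by simp
      have "bnd X1 (gw + hz) = z"
        using gwb hzb gwc hzc by (simp add: bnd_add is_chain_fin)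
      then have "FV (sub X1 D1) k z \<le> enat (vol (gw + hz))"
        using FV_le_vol[of "sub X1 D1" k "gw + hz" z] is_chain_add[OF gwc hzc] by simp
      also have "vol (gw + hz) \<le> MG * v + MH * (r * n)"
      proof -
        have "vol (gw + hz) \<le> vol gw + vol hz" using vol_add is_chain_fin gwc hzc by blast
        moreover have "MH * vol z \<le> MH * (r * n)" using vz by (rule mult_le_mono2)
        ultimately show ?thesis using gwv hzv by linarith
      qed
      also have "MG * v + MH * (r * n) \<le> C * v + (C * n + C)"
      proof -
        have "MG * v \<le> C * v" using C(3) by (rule mult_le_mono1)
        moreover have "MH * (r * n) \<le> C * n" using C(4) by (metis mult.assoc mult_le_mono1)
        ultimately show ?thesis by linarith
      qed
      finally show ?thesis using enat by simp
    qed
  qed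
  have "\<forall>x. VolD X1 D1 k x \<le> enat C * VolD X2 D2 k (C * x + C) + enat (C * x + C)"
  proof
    fix x show "VolD X1 D1 k x \<le> enat C * VolD X2 D2 k (C * x + C) + enat (C * x + C)"
      unfolding VolD_def[of X1 D1 k x] by (rule SUP_least) (use main in auto)
  qed
  then show ?thesis unfolding fpreceq_def using C(1) by blast
qed



lemma k_dehn_D:
  assumes "k_dehn X k"
  shows "cw X" "path_connected X"
    "\<And>j n. 1 \<le> j \<Longrightarrow> j < k \<Longrightarrow> \<exists>B. \<forall>z. is_cycle X j z \<and> vol z \<le> n \<longrightarrow> FV X (Suc j) z \<le> enat B"
    "\<exists>r. \<forall>s\<in>cells X. cdim X s \<le> k \<longrightarrow> vol (cinc X s) \<le> r"
proof -
  show "cw X" "path_connected X" using assms by (simp_all add: k_dehn_def k_connected_def)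
  have d: "\<forall>j. 1 \<le> j \<and> j \<le> k \<longrightarrow>
          (\<forall>n. \<exists>B. \<forall>z. is_cycle X j z \<and> vol z \<le> n \<longrightarrow> FV X (Suc j) z \<le> enat B)"
    using assms by (simp add: k_dehn_def)
  show "\<And>j n. 1 \<le> j \<Longrightarrow> j < k \<Longrightarrow> \<exists>B. \<forall>z. is_cycle X j z \<and> vol z \<le> n \<longrightarrow> FV X (Suc j) z \<le> enat B"
  proof -
    fix j n assume "1 \<le> j" "j < k"
    then have "1 \<le> j \<and> j \<le> k" by simp
    then show "\<exists>B. \<forall>z. is_cycle X j z \<and> vol z \<le> n \<longrightarrow> FV X (Suc j) z \<le> enat B"
      using d by blast
  qed
  obtain r where r: "\<forall>s \<in> cells X. cdim X s \<le> k + 1 \<longrightarrow> vol (cinc X s) \<le> r \<and> (cdim X s = 2 \<longrightarrow> length (catt X s) \<le> r)"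
    using assms unfolding k_dehn_def by blast
  have "\<forall>s\<in>cells X. cdim X s \<le> k \<longrightarrow> vol (cinc X s) \<le> r"
  proof (intro ballI impI)
    fix s assume "s \<in> cells X" "cdim X s \<le> k"
    then show "vol (cinc X s) \<le> r" using r by simp
  qed
  then show "\<exists>r. \<forall>s\<in>cells X. cdim X s \<le> k \<longrightarrow> vol (cinc X s) \<le> r" by blast
qed

lemma subcomplex_D:
  assumes "subcomplex X D"
  shows "D \<subseteq> cells X" "\<And>s. s \<in> D \<Longrightarrow> supp (cinc X s) \<subseteq> D"
    "\<And>e. e \<in> D \<Longrightarrow> cdim X e = 1 \<Longrightarrow> fst (cends X e) \<in> D \<and> snd (cends X e) \<in> D"
  using assms unfolding subcomplex_def by auto

lemma dir:
  assumes k: "1 \<le> k" and h1: "k_dehn X1 k" and s1: "subcomplex X1 D1" and h1s: "k_dehn (sub X1 D1) k"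
    and h2: "k_dehn X2 k" and s2: "subcomplex X2 D2" and h2s: "k_dehn (sub X2 D2) k"
    and pv: "\<And>v. v \<in> verts X1 \<Longrightarrow> \<phi> v \<in> verts X2"
    and pvs: "\<And>v. v \<in> verts (sub X1 D1) \<Longrightarrow> \<phi> v \<in> verts (sub X2 D2)"
    and pe: "\<And>e. e \<in> cells X1 \<Longrightarrow> cdim X1 e = 1 \<Longrightarrow>
               gdist X2 (\<phi> (fst (cends X1 e))) (\<phi> (snd (cends X1 e))) \<le> L"
    and pes: "\<And>e. e \<in> D1 \<Longrightarrow> cdim X1 e = 1 \<Longrightarrow>
               gdist (sub X2 D2) (\<phi> (fst (cends X1 e))) (\<phi> (snd (cends X1 e))) \<le> L"
    and qvs: "\<And>v. v \<in> verts (sub X2 D2) \<Longrightarrow> \<psi> v \<in> verts (sub X1 D1)"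
    and qes: "\<And>e. e \<in> D2 \<Longrightarrow> cdim X2 e = 1 \<Longrightarrow>
               gdist (sub X1 D1) (\<psi> (fst (cends X2 e))) (\<psi> (snd (cends X2 e))) \<le> L"
    and bk: "\<And>v. v \<in> verts (sub X1 D1) \<Longrightarrow> gdist (sub X1 D1) (\<psi> (\<phi> v)) v \<le> L"
  shows "VolD X1 D1 k \<preceq>\<^sub>f VolD X2 D2 k"
proof -
  note c1 = k_dehn_D[OF h1] and c1s = k_dehn_D[OF h1s] and c2 = k_dehn_D[OF h2] and c2s = k_dehn_D[OF h2s]
  note d1 = subcomplex_D[OF s1] and d2 = subcomplex_D[OF s2]
  obtain r1 where r1: "\<And>s. s \<in> cells X1 \<Longrightarrow> cdim X1 s \<le> k \<Longrightarrow> vol (cinc X1 s) \<le> r1"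
    using c1(4) by blast
  obtain r2s where r2s: "\<And>s. s \<in> D2 \<Longrightarrow> cdim X2 s \<le> k \<Longrightarrow> vol (cinc X2 s) \<le> r2s"
    using c2s(4) by auto
  obtain r1s where r1s: "\<And>s. s \<in> D1 \<Longrightarrow> cdim X1 s \<le> k \<Longrightarrow> vol (cinc X1 s) \<le> r1s"
    using c1s(4) by auto
  have "\<exists>F M. \<forall>i\<le>k. cmap_ok X1 D1 X2 D2 \<phi> F M i"
  proof (rule chain_map_exists[OF c1(1) c2(1) d2(1) d1(2)])
    fix v assume v: "v \<in> cells X1" "cdim X1 v = 0"
    then have "v \<in> verts X1" by (simp add: verts_def)
    then have "\<phi> v \<in> verts X2" by (rule pv)
    moreover have "v \<in> D1 \<Longrightarrow> \<phi> v \<in> D2" using pvs[of v] v by (simp add: verts_sub)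
    ultimately show "\<phi> v \<in> cells X2 \<and> cdim X2 (\<phi> v) = 0 \<and> (v \<in> D1 \<longrightarrow> \<phi> v \<in> D2)"
      by (simp add: verts_def)
  next
    fix e assume e: "e \<in> cells X1" "cdim X1 e = 1"
    have ab: "fst (cends X1 e) \<in> verts X1" "snd (cends X1 e) \<in> verts X1" using cw_edge[OF c1(1) e] by auto
    show "\<exists>u. is_chain X2 1 u \<and> (e \<in> D1 \<longrightarrow> is_chain (sub X2 D2) 1 u)
          \<and> bnd X2 u = dl (\<phi> (snd (cends X1 e))) - dl (\<phi> (fst (cends X1 e))) \<and> vol u \<le> L"
    proof (cases "e \<in> D1")
      case True
      then have "fst (cends X1 e) \<in> verts (sub X1 D1)" "snd (cends X1 e) \<in> verts (sub X1 D1)"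
        using d1(3)[OF True e(2)] ab by (auto simp: verts_sub verts_def)
      then have "\<phi> (fst (cends X1 e)) \<in> verts (sub X2 D2)" "\<phi> (snd (cends X1 e)) \<in> verts (sub X2 D2)"
        using pvs by auto
      from gdist_path_chain[OF c2s(1) c2s(2) this] obtain u where
        u: "is_chain (sub X2 D2) 1 u" "bnd X2 u = dl (\<phi> (snd (cends X1 e))) - dl (\<phi> (fst (cends X1 e)))"
           "vol u \<le> gdist (sub X2 D2) (\<phi> (fst (cends X1 e))) (\<phi> (snd (cends X1 e)))" by auto
      have "vol u \<le> L" using u(3) pes[OF True e(2)] by linarith
      then show ?thesis using is_chain_sub_X[OF u(1) d2(1)] u by blast
    next
      case False
      have "\<phi> (fst (cends X1 e)) \<in> verts X2" "\<phi> (snd (cends X1 e)) \<in> verts X2" using ab pv by auto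
      from gdist_path_chain[OF c2(1) c2(2) this] obtain u where
        u: "is_chain X2 1 u" "bnd X2 u = dl (\<phi> (snd (cends X1 e))) - dl (\<phi> (fst (cends X1 e)))"
           "vol u \<le> gdist X2 (\<phi> (fst (cends X1 e))) (\<phi> (snd (cends X1 e)))" by auto
      have "vol u \<le> L" using u(3) pe[OF e] by linarith
      then show ?thesis using False u by blast
    qed
  next
    show "\<And>s. s \<in> cells X1 \<Longrightarrow> cdim X1 s \<le> k \<Longrightarrow> vol (cinc X1 s) \<le> r1" by (rule r1)
  next
    show "\<And>j n. 1 \<le> j \<Longrightarrow> j < k \<Longrightarrow> \<exists>B. \<forall>z. is_cycle X2 j z \<and> vol z \<le> n \<longrightarrow> FV X2 (Suc j) z \<le> enat B"
      by (rule c2(3))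
  next
    show "\<And>j n. 1 \<le> j \<Longrightarrow> j < k \<Longrightarrow> \<exists>B. \<forall>z. is_cycle (sub X2 D2) j z \<and> vol z \<le> n
           \<longrightarrow> FV (sub X2 D2) (Suc j) z \<le> enat B"
      by (rule c2s(3))
  qed
  then obtain F MF where F: "\<And>i. i \<le> k \<Longrightarrow> cmap_ok X1 D1 X2 D2 \<phi> F MF i" by blast
  have "\<exists>G M. \<forall>i\<le>k. cmap_ok (sub X2 D2) D2 (sub X1 D1) D1 \<psi> G M i"
  proof (rule chain_map_exists)
    show "cw (sub X2 D2)" "cw (sub X1 D1)" by (rule c2s(1), rule c1s(1))
    show "D1 \<subseteq> cells (sub X1 D1)" by simp
    show "\<And>s. s \<in> D2 \<Longrightarrow> supp (cinc (sub X2 D2) s) \<subseteq> D2" using d2(2) by simp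
  next
    fix v assume v: "v \<in> cells (sub X2 D2)" "cdim (sub X2 D2) v = 0"
    then have "v \<in> verts (sub X2 D2)" by (simp add: verts_def)
    then have "\<psi> v \<in> verts (sub X1 D1)" by (rule qvs)
    then show "\<psi> v \<in> cells (sub X1 D1) \<and> cdim (sub X1 D1) (\<psi> v) = 0 \<and> (v \<in> D2 \<longrightarrow> \<psi> v \<in> D1)"
      by (simp add: verts_def)
  next
    fix e assume e: "e \<in> cells (sub X2 D2)" "cdim (sub X2 D2) e = 1"
    have ab: "fst (cends X2 e) \<in> verts (sub X2 D2)" "snd (cends X2 e) \<in> verts (sub X2 D2)"
      using cw_edge[OF c2s(1) e] by auto
    then have "\<psi> (fst (cends X2 e)) \<in> verts (sub X1 D1)" "\<psi> (snd (cends X2 e)) \<in> verts (sub X1 D1)"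
      using qvs by auto
    from gdist_path_chain[OF c1s(1) c1s(2) this] obtain u where
      u: "is_chain (sub X1 D1) 1 u" "bnd X1 u = dl (\<psi> (snd (cends X2 e))) - dl (\<psi> (fst (cends X2 e)))"
         "vol u \<le> gdist (sub X1 D1) (\<psi> (fst (cends X2 e))) (\<psi> (snd (cends X2 e)))" by auto
    have "vol u \<le> L" using u(3) qes[of e] e by (simp add: le_trans)
    then show "\<exists>u. is_chain (sub X1 D1) 1 u \<and> (e \<in> D2 \<longrightarrow> is_chain (sub (sub X1 D1) D1) 1 u)
          \<and> bnd (sub X1 D1) u = dl (\<psi> (snd (cends (sub X2 D2) e))) - dl (\<psi> (fst (cends (sub X2 D2) e)))
          \<and> vol u \<le> L" using u by auto
  next
    show "\<And>s. s \<in> cells (sub X2 D2) \<Longrightarrow> cdim (sub X2 D2) s \<le> k \<Longrightarrow> vol (cinc (sub X2 D2) s) \<le> r2s"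
      using r2s by simp
  next
    show "\<And>j n. 1 \<le> j \<Longrightarrow> j < k \<Longrightarrow> \<exists>B. \<forall>z. is_cycle (sub X1 D1) j z \<and> vol z \<le> n
           \<longrightarrow> FV (sub X1 D1) (Suc j) z \<le> enat B"
      by (rule c1s(3))
  next
    show "\<And>j n. 1 \<le> j \<Longrightarrow> j < k \<Longrightarrow> \<exists>B. \<forall>z. is_cycle (sub (sub X1 D1) D1) j z \<and> vol z \<le> n
           \<longrightarrow> FV (sub (sub X1 D1) D1) (Suc j) z \<le> enat B"
      using c1s(3) by simp
  qed
  then obtain G MG where G: "\<And>i. i \<le> k \<Longrightarrow> cmap_ok (sub X2 D2) D2 (sub X1 D1) D1 \<psi> G MG i" by blast
  have GF: "cmap_ok (sub X1 D1) D1 (sub X1 D1) D1 (\<psi> \<circ> \<phi>) (\<lambda>i s. lift (G i) (F i s)) (MG * MF) i"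
    if "i \<le> k" for i
  proof -
    have "i = 0 \<or> cmap_ok X1 D1 X2 D2 \<phi> F MF (i - 1)" using F[of "i - 1"] that by auto
    then show ?thesis by (rule cmap_comp[OF c2s(1) c1(1) F[OF that] _ G[OF that] d1(1)])
  qed
  have "\<exists>H M. \<forall>i<k. hom_ok (sub X1 D1) (\<lambda>i s. lift (G i) (F i s)) H M i"
  proof (rule homotopy_exists[OF c1s(1) GF])
    fix v assume v: "v \<in> cells (sub X1 D1)" "cdim (sub X1 D1) v = 0"
    then have vv: "v \<in> verts (sub X1 D1)" by (simp add: verts_def)
    have w: "\<psi> (\<phi> v) \<in> verts (sub X1 D1)" using qvs pvs vv by blast
    from gdist_path_chain[OF c1s(1) c1s(2) w vv] obtain u where
      u: "is_chain (sub X1 D1) 1 u" "bnd X1 u = dl v - dl (\<psi> (\<phi> v))"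
         "vol u \<le> gdist (sub X1 D1) (\<psi> (\<phi> v)) v" by auto
    then show "\<exists>u. is_chain (sub X1 D1) 1 u \<and> bnd (sub X1 D1) u = dl v - dl ((\<psi> \<circ> \<phi>) v) \<and> vol u \<le> L"
    proof -
      have "vol u \<le> L" using u(3) bk[OF vv] by linarith
      then show ?thesis using u by auto
    qed
  next
    show "\<And>s. s \<in> cells (sub X1 D1) \<Longrightarrow> cdim (sub X1 D1) s \<le> k \<Longrightarrow> vol (cinc (sub X1 D1) s) \<le> r1s"
      using r1s by simp
  next
    show "\<And>j n. 1 \<le> j \<Longrightarrow> j < k \<Longrightarrow> \<exists>B. \<forall>z. is_cycle (sub X1 D1) j z \<and> vol z \<le> n
           \<longrightarrow> FV (sub X1 D1) (Suc j) z \<le> enat B"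
      by (rule c1s(3))
  qed auto
  then obtain H MH where H: "\<And>i. i < k \<Longrightarrow> hom_ok (sub X1 D1) (\<lambda>i s. lift (G i) (F i s)) H MH i"
    by blast
  show ?thesis
    by (rule dir_core[OF k c1(1) c2(1) c1s(1) c2s(1) d1(1) d2(1) r1 F G H])
qed



lemma edge_gdist:
  assumes "cw X" "e \<in> cells X" "cdim X e = 1"
  shows "gdist X (fst (cends X e)) (snd (cends X e)) \<le> 1"
proof -
  have "epath X (fst (cends X e)) [(e, True)] (snd (cends X e))"
    using cw_edge[OF assms] assms by (simp add: esrc_def etgt_def)
  then show ?thesis using gdist_le by fastforce
qed

lemma qi_up:
  assumes "qi_embedding X X' f K C" "x \<in> verts X" "y \<in> verts X" "gdist X x y \<le> 1"
  shows "real (gdist X' (f x) (f y)) \<le> K + C"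
proof -
  have "real (gdist X' (f x) (f y)) \<le> K * real (gdist X x y) + C"
    using assms unfolding qi_embedding_def by blast
  moreover have "K * real (gdist X x y) \<le> K * 1"
    using assms unfolding qi_embedding_def by (intro mult_left_mono) auto
  ultimately show ?thesis by simp
qed

lemma qi_low:
  assumes "qi_embedding X X' f K C" "x \<in> verts X" "y \<in> verts X" "real (gdist X' (f x) (f y)) \<le> m"
  shows "real (gdist X x y) \<le> K * (m + C)"
proof -
  have K: "K > 0" using assms unfolding qi_embedding_def by blast
  have "real (gdist X x y) / K - C \<le> real (gdist X' (f x) (f y))"
    using assms unfolding qi_embedding_def by blast
  then have "real (gdist X x y) / K \<le> m + C" using assms(4) by linarith
  then show ?thesis using K by (simp add: divide_le_eq mult.commute)
qed

lemma nat_ceil_bound: "real n \<le> x \<Longrightarrow> n \<le> nat \<lceil>x\<rceil>"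
  by (metis ceiling_mono ceiling_of_nat nat_int nat_mono)



lemma verts_sub_subset: "D \<subseteq> cells X \<Longrightarrow> verts (sub X D) \<subseteq> verts X"
  by (auto simp: verts_def)

theorem mainTheorem1:
  fixes X1 :: "'a cellcx" and D1 :: "'a set" and X2 :: "'b cellcx" and D2 :: "'b set"
    and k :: nat
  assumes "1 \<le> k"
    and "k_dehn X1 k" and "subcomplex X1 D1" and "k_dehn (sub X1 D1) k"
    and "k_dehn X2 k" and "subcomplex X2 D2" and "k_dehn (sub X2 D2) k"
    and "qi_pairs X1 D1 X2 D2"
  shows "VolD X1 D1 k \<asymp>\<^sub>f VolD X2 D2 k"
proof -
  note k = assms(1) and h1 = assms(2) and s1 = assms(3) and h1s = assms(4)
    and h2 = assms(5) and s2 = assms(6) and h2s = assms(7)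
  note c1 = k_dehn_D[OF h1] and c1s = k_dehn_D[OF h1s] and c2 = k_dehn_D[OF h2] and c2s = k_dehn_D[OF h2s]
  note d1 = subcomplex_D[OF s1] and d2 = subcomplex_D[OF s2]
  obtain f K C K' C' where Q: "quasi_isometry X1 X2 f K C"
    and fY: "\<And>x. x \<in> verts (sub X1 D1) \<Longrightarrow> f x \<in> verts (sub X2 D2)"
    and QY: "quasi_isometry (sub X1 D1) (sub X2 D2) f K' C'"
    using assms(8) unfolding qi_pairs_def by blast
  have QE: "qi_embedding X1 X2 f K C" and QYE: "qi_embedding (sub X1 D1) (sub X2 D2) f K' C'"
    using Q QY by (simp_all add: quasi_isometry_def)
  have KC: "K > 0" "C \<ge> 0" "K' > 0" "C' \<ge> 0" using QE QYE by (simp_all add: qi_embedding_def)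
  have fX: "\<And>x. x \<in> verts X1 \<Longrightarrow> f x \<in> verts X2" using QE by (simp add: qi_embedding_def)
  have V1: "verts (sub X1 D1) \<subseteq> verts X1" and V2: "verts (sub X2 D2) \<subseteq> verts X2"
    using verts_sub_subset d1(1) d2(1) by auto
  define g where "g = (\<lambda>y. SOME x. x \<in> verts (sub X1 D1) \<and> real (gdist (sub X2 D2) y (f x)) \<le> C')"
  have gY: "g y \<in> verts (sub X1 D1) \<and> real (gdist (sub X2 D2) y (f (g y))) \<le> C'"
    if "y \<in> verts (sub X2 D2)" for y
  proof -
    have "\<exists>x. x \<in> verts (sub X1 D1) \<and> real (gdist (sub X2 D2) y (f x)) \<le> C'"
      using QY that unfolding quasi_isometry_def by blast
    then show ?thesis unfolding g_def by (rule someI_ex)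
  qed
  define gX where "gX = (\<lambda>y. SOME x. x \<in> verts X1 \<and> real (gdist X2 y (f x)) \<le> C)"
  have gXp: "gX y \<in> verts X1 \<and> real (gdist X2 y (f (gX y))) \<le> C" if "y \<in> verts X2" for y
  proof -
    have "\<exists>x. x \<in> verts X1 \<and> real (gdist X2 y (f x)) \<le> C"
      using Q that unfolding quasi_isometry_def by blast
    then show ?thesis unfolding gX_def by (rule someI_ex)
  qed
  define h where "h = (\<lambda>y. if y \<in> verts (sub X2 D2) then g y else gX y)"
  have hp: "h y \<in> verts X1 \<and> real (gdist X2 y (f (h y))) \<le> C + C'" if y: "y \<in> verts X2" for y
  proof (cases "y \<in> verts (sub X2 D2)")
    case True
    then have a: "g y \<in> verts (sub X1 D1)" "real (gdist (sub X2 D2) y (f (g y))) \<le> C'" using gY by auto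
    have "gdist X2 y (f (g y)) \<le> gdist (sub X2 D2) y (f (g y))"
      using gdist_sub[OF c2s(2) d2(1) True fY[OF a(1)]] .
    then show ?thesis using a True V1 KC unfolding h_def by auto
  next
    case False
    then show ?thesis using gXp[OF y] KC unfolding h_def by auto
  qed
  define \<Lambda> where "\<Lambda> = (K + C) + (K' + C') + K' * (3 * C' + 1) + K * (2 * (C + C') + 1 + C)
      + K' * (C' + C') + C'"
  have p1: "K' * (3 * C' + 1) \<ge> 0" "K * (2 * (C + C') + 1 + C) \<ge> 0" "K' * (C' + C') \<ge> 0"
    using KC by simp_all
  define L where "L = nat \<lceil>\<Lambda>\<rceil>"
  have toL: "n \<le> L" if "real n \<le> b" "b \<le> \<Lambda>" for n b
    unfolding L_def using that by (intro nat_ceil_bound) linarith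
  have L1: "K + C \<le> \<Lambda>" "K' + C' \<le> \<Lambda>" "K' * (3 * C' + 1) \<le> \<Lambda>"
    "K * (2 * (C + C') + 1 + C) \<le> \<Lambda>" "K' * (C' + C') \<le> \<Lambda>" "C' \<le> \<Lambda>"
    using p1 KC unfolding \<Lambda>_def by linarith+
  have E1: "gdist X2 (f (fst (cends X1 e))) (f (snd (cends X1 e))) \<le> L"
    if e: "e \<in> cells X1" "cdim X1 e = 1" for e
  proof -
    have ab: "fst (cends X1 e) \<in> verts X1" "snd (cends X1 e) \<in> verts X1" using cw_edge[OF c1(1) e] by auto
    have "real (gdist X2 (f (fst (cends X1 e))) (f (snd (cends X1 e)))) \<le> K + C"
      by (rule qi_up[OF QE ab edge_gdist[OF c1(1) e]])
    then show ?thesis using L1(1) by (rule toL)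
  qed
  have E1s: "gdist (sub X2 D2) (f (fst (cends X1 e))) (f (snd (cends X1 e))) \<le> L"
    if e: "e \<in> D1" "cdim X1 e = 1" for e
  proof -
    have e': "e \<in> cells (sub X1 D1)" "cdim (sub X1 D1) e = 1" using e by auto
    have ab: "fst (cends X1 e) \<in> verts (sub X1 D1)" "snd (cends X1 e) \<in> verts (sub X1 D1)"
      using cw_edge[OF c1s(1) e'] by auto
    have "real (gdist (sub X2 D2) (f (fst (cends X1 e))) (f (snd (cends X1 e)))) \<le> K' + C'"
      using qi_up[OF QYE ab] edge_gdist[OF c1s(1) e'] by simp
    then show ?thesis using L1(2) by (rule toL)
  qed
  have E2s: "real (gdist (sub X1 D1) (g (fst (cends X2 e))) (g (snd (cends X2 e)))) \<le> K' * (3 * C' + 1)"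
    if e: "e \<in> D2" "cdim X2 e = 1" for e
  proof -
    define a where "a = fst (cends X2 e)"
    define b where "b = snd (cends X2 e)"
    have e': "e \<in> cells (sub X2 D2)" "cdim (sub X2 D2) e = 1" using e by auto
    have ab: "a \<in> verts (sub X2 D2)" "b \<in> verts (sub X2 D2)"
      using cw_edge[OF c2s(1) e'] by (auto simp: a_def b_def)
    have ab1: "gdist (sub X2 D2) a b \<le> 1" using edge_gdist[OF c2s(1) e'] by (simp add: a_def b_def)
    have ga: "g a \<in> verts (sub X1 D1)" "real (gdist (sub X2 D2) a (f (g a))) \<le> C'" using gY[OF ab(1)] by auto
    have gb: "g b \<in> verts (sub X1 D1)" "real (gdist (sub X2 D2) b (f (g b))) \<le> C'" using gY[OF ab(2)] by auto
    have fga: "f (g a) \<in> verts (sub X2 D2)" "f (g b) \<in> verts (sub X2 D2)" using fY ga gb by auto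
    have t1: "gdist (sub X2 D2) (f (g a)) (f (g b)) \<le> gdist (sub X2 D2) (f (g a)) a + gdist (sub X2 D2) a (f (g b))"
      using gdist_tri[OF c2s(2) fga(1) ab(1) fga(2)] .
    have t2: "gdist (sub X2 D2) a (f (g b)) \<le> gdist (sub X2 D2) a b + gdist (sub X2 D2) b (f (g b))"
      using gdist_tri[OF c2s(2) ab(1) ab(2) fga(2)] .
    have t3: "gdist (sub X2 D2) (f (g a)) a = gdist (sub X2 D2) a (f (g a))"
      using gdist_sym[OF c2s(2) fga(1) ab(1)] .
    have t4: "real (gdist (sub X2 D2) (f (g a)) (f (g b))) \<le> real (gdist (sub X2 D2) a (f (g a))) + real (gdist (sub X2 D2) a b) + real (gdist (sub X2 D2) b (f (g b)))"
      using t1 t2 t3 by linarith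
    have "real (gdist (sub X2 D2) (f (g a)) (f (g b))) \<le> 2 * C' + 1"
      using t4 ga gb of_nat_le_iff[of "gdist (sub X2 D2) a b" 1] ab1 by simp
    from qi_low[OF QYE ga(1) gb(1) this] show ?thesis by (simp add: a_def b_def algebra_simps)
  qed
  have E2: "real (gdist X1 (h (fst (cends X2 e))) (h (snd (cends X2 e)))) \<le> K * (2 * (C + C') + 1 + C)"
    if e: "e \<in> cells X2" "cdim X2 e = 1" for e
  proof -
    define a where "a = fst (cends X2 e)"
    define b where "b = snd (cends X2 e)"
    have ab: "a \<in> verts X2" "b \<in> verts X2" using cw_edge[OF c2(1) e] by (auto simp: a_def b_def)
    have ab1: "gdist X2 a b \<le> 1" using edge_gdist[OF c2(1) e] by (simp add: a_def b_def)
    have ha: "h a \<in> verts X1" "real (gdist X2 a (f (h a))) \<le> C + C'" using hp[OF ab(1)] by auto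
    have hb: "h b \<in> verts X1" "real (gdist X2 b (f (h b))) \<le> C + C'" using hp[OF ab(2)] by auto
    have fha: "f (h a) \<in> verts X2" "f (h b) \<in> verts X2" using fX ha hb by auto
    have t1: "gdist X2 (f (h a)) (f (h b)) \<le> gdist X2 (f (h a)) a + gdist X2 a (f (h b))"
      using gdist_tri[OF c2(2) fha(1) ab(1) fha(2)] .
    have t2: "gdist X2 a (f (h b)) \<le> gdist X2 a b + gdist X2 b (f (h b))"
      using gdist_tri[OF c2(2) ab(1) ab(2) fha(2)] .
    have t3: "gdist X2 (f (h a)) a = gdist X2 a (f (h a))"
      using gdist_sym[OF c2(2) fha(1) ab(1)] .
    have t4: "real (gdist X2 (f (h a)) (f (h b))) \<le> real (gdist X2 a (f (h a))) + real (gdist X2 a b) + real (gdist X2 b (f (h b)))"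
      using t1 t2 t3 by linarith
    have "real (gdist X2 (f (h a)) (f (h b))) \<le> 2 * (C + C') + 1"
      using t4 ha hb of_nat_le_iff[of "gdist X2 a b" 1] ab1 by simp
    from qi_low[OF QE ha(1) hb(1) this] show ?thesis by (simp add: a_def b_def)
  qed
  have B1: "real (gdist (sub X1 D1) (g (f v)) v) \<le> K' * (C' + C')" if v: "v \<in> verts (sub X1 D1)" for v
  proof -
    have fv: "f v \<in> verts (sub X2 D2)" using fY v .
    have x: "g (f v) \<in> verts (sub X1 D1)" "real (gdist (sub X2 D2) (f v) (f (g (f v)))) \<le> C'"
      using gY[OF fv] by auto
    have "gdist (sub X2 D2) (f (g (f v))) (f v) = gdist (sub X2 D2) (f v) (f (g (f v)))"
      using gdist_sym[OF c2s(2) fY[OF x(1)] fv] .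
    then have "real (gdist (sub X2 D2) (f (g (f v))) (f v)) \<le> C'" using x by simp
    from qi_low[OF QYE x(1) v this] show ?thesis .
  qed
  have B2: "real (gdist (sub X2 D2) (f (h v)) v) \<le> C'" if v: "v \<in> verts (sub X2 D2)" for v
  proof -
    have x: "g v \<in> verts (sub X1 D1)" "real (gdist (sub X2 D2) v (f (g v))) \<le> C'" using gY[OF v] by auto
    have "gdist (sub X2 D2) (f (g v)) v = gdist (sub X2 D2) v (f (g v))"
      using gdist_sym[OF c2s(2) fY[OF x(1)] v] .
    then show ?thesis using x v unfolding h_def by simp
  qed
  have dir1: "VolD X1 D1 k \<preceq>\<^sub>f VolD X2 D2 k"
  proof (rule dir[OF k h1 s1 h1s h2 s2 h2s, of f L g])
    show "\<And>v. v \<in> verts X1 \<Longrightarrow> f v \<in> verts X2" by (rule fX)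
    show "\<And>v. v \<in> verts (sub X1 D1) \<Longrightarrow> f v \<in> verts (sub X2 D2)" by (rule fY)
    show "\<And>e. e \<in> cells X1 \<Longrightarrow> cdim X1 e = 1 \<Longrightarrow>
      gdist X2 (f (fst (cends X1 e))) (f (snd (cends X1 e))) \<le> L" by (rule E1)
    show "\<And>e. e \<in> D1 \<Longrightarrow> cdim X1 e = 1 \<Longrightarrow>
      gdist (sub X2 D2) (f (fst (cends X1 e))) (f (snd (cends X1 e))) \<le> L" by (rule E1s)
    show "\<And>v. v \<in> verts (sub X2 D2) \<Longrightarrow> g v \<in> verts (sub X1 D1)" using gY by blast
    show "\<And>e. e \<in> D2 \<Longrightarrow> cdim X2 e = 1 \<Longrightarrow>
      gdist (sub X1 D1) (g (fst (cends X2 e))) (g (snd (cends X2 e))) \<le> L"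
      using E2s L1(3) toL by blast
    show "\<And>v. v \<in> verts (sub X1 D1) \<Longrightarrow> gdist (sub X1 D1) (g (f v)) v \<le> L"
      using B1 L1(5) toL by blast
  qed
  have dir2: "VolD X2 D2 k \<preceq>\<^sub>f VolD X1 D1 k"
  proof (rule dir[OF k h2 s2 h2s h1 s1 h1s, of h L f])
    show "\<And>v. v \<in> verts X2 \<Longrightarrow> h v \<in> verts X1" using hp by blast
    show "\<And>v. v \<in> verts (sub X2 D2) \<Longrightarrow> h v \<in> verts (sub X1 D1)"
      using gY unfolding h_def by auto
    show "\<And>e. e \<in> cells X2 \<Longrightarrow> cdim X2 e = 1 \<Longrightarrow>
      gdist X1 (h (fst (cends X2 e))) (h (snd (cends X2 e))) \<le> L"
      using E2 L1(4) toL by blast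
    show "\<And>e. e \<in> D2 \<Longrightarrow> cdim X2 e = 1 \<Longrightarrow>
      gdist (sub X1 D1) (h (fst (cends X2 e))) (h (snd (cends X2 e))) \<le> L"
    proof -
      fix e assume e: "e \<in> D2" "cdim X2 e = 1"
      have e': "e \<in> cells (sub X2 D2)" "cdim (sub X2 D2) e = 1" using e by auto
      have "fst (cends X2 e) \<in> verts (sub X2 D2)" "snd (cends X2 e) \<in> verts (sub X2 D2)"
        using cw_edge[OF c2s(1) e'] by auto
      then show "gdist (sub X1 D1) (h (fst (cends X2 e))) (h (snd (cends X2 e))) \<le> L"
        using E2s[OF e] L1(3) toL unfolding h_def by auto
    qed
    show "\<And>v. v \<in> verts (sub X1 D1) \<Longrightarrow> f v \<in> verts (sub X2 D2)" by (rule fY)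
    show "\<And>e. e \<in> D1 \<Longrightarrow> cdim X1 e = 1 \<Longrightarrow>
      gdist (sub X2 D2) (f (fst (cends X1 e))) (f (snd (cends X1 e))) \<le> L" by (rule E1s)
    show "\<And>v. v \<in> verts (sub X2 D2) \<Longrightarrow> gdist (sub X2 D2) (f (h v)) v \<le> L"
      using B2 L1(6) toL by blast
  qed
  show ?thesis unfolding fasymp_def using dir1 dir2 by blast
qed


end
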